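(* Let $P = u_1;\ldots;u_k$ ($k\ge 1$) be any PGLD program whose basic instructions are of the form $f.m$ with $f\in\mathrm{Foci}$, $m\in\mathrm{Meth}$. Let $t_P$ be the molecular dynamics state reached from the initial state $t_{\mathrm{init}}$ by executing the PGA program $\mathrm{pgldmd}(P)$, i.e. by applying $\mathrm{eff}$ successively for the methods of its instructions in order. Then $$|P|_{\mathrm{PGLD}} = \tau_{\mathrm{tau}}\big(|I| /_{\mathsf{md}} \mathrm{MDS}_{t_P}\big).$$
   Context: Threads. Let $A$ be a set of basic actions, $\tau\notin A$. Threads are built from $\mathsf S$ (termination), $\mathsf D$ (deadlock) and postconditional composition $x\unlhd a\unrhd y$ for $a\in A\cup\{\tau\}$ (perform $a$, then continue as $x$ if the reply is true, as $y$ if false); $a\circ x$ abbreviates $x\unlhd a\unrhd x$, and $x\unlhd\tau\unrhd y=\tau\circ x$. Threads are taken in the projective limit model: projections are $\pi_0(x)=\mathsf D$, $\pi_{n+1}(\mathsf S)=\mathsf S$, $\pi_{n+1}(\mathsf D)=\mathsf D$, $\pi_{n+1}(x\unlhd a\unrhd y)=\pi_n(x)\unlhd a\unrhd\pi_n(y)$; two threads are equal iff all their projections are equal; every guarded system of recursion equations has a unique solution. PGA. A PGA program is a finite, or eventually periodic infinite, sequence $v_1v_2\ldots$ (written with $;$ and $Y^\omega=Y;Y;\ldots$) of primitive instructions: basic instruction $a$, positive test $+a$, negative test $-a$, forward jump $\#l$ ($l\in\mathbb N$), termination $!$. Its behaviour $|X|$ is $T_1$ where: $T_i=\mathsf D$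 if $i$ exceeds the length; if $v_i=a$ then $T_i=a\circ T_{i+1}$; if $v_i=+a$ then $T_i=T_{i+1}\unlhd a\unrhd T_{i+2}$; if $v_i=-a$ then $T_i=T_{i+2}\unlhd a\unrhd T_{i+1}$; if $v_i=\#l$ then $T_i=T_{i+l}$ for $l>0$ and $T_i=\mathsf D$ for $l=0$; if $v_i=!$ then $T_i=\mathsf S$; and $T_i=\mathsf D$ whenever the chain of jumps starting at position $i$ is infinite. PGLD. A PGLD program $u_1;\ldots;u_k$ consists of instructions $a$, $+a$, $-a$ (as in PGA) and absolute jumps $\#\#l$ ($l\in\mathbb N$). Its behaviour is $|P|_{\mathrm{PGLD}}=|(\psi_1(u_1);\ldots;\psi_k(u_k);!;!)^\omega|$ where $\psi_j(\#\#l)=\#(l-j)$ if $j\le l\le k$, $\psi_j(\#\#l)=\#(k+2-(j-l))$ if $0<l<j$, $\psi_j(\#\#l)=!$ if $l=0$ or $l>k$, and $\psi_j(u)=u$ for non-jump $u$. Molecular dynamics. Fix a finite set $\mathrm{Spot}$ of spots with a total order $\le$; finite disjoint sets $\mathrm{Foci}$ (foci) and $\mathrm{Meth}$ (methods) with $\mathrm{Foci},\mathrm{Meth}\subseteq\mathrm{Spot}$; a finite set $\mathrm{Field}$ containing distinct fields $\mathsf{stop},\mathsf{ajmp},\mathsf{focus},\mathsf{method},\mathsf{pos},\mathsf{neg}$; an infinite countable set $\mathrm{PAtom}$ of proto-atoms, $\bot\notin\mathrm{PAtom}$, with a bijection $\mathrm{proatom}:\mathbb N_{\ge1}\to\mathrm{PAtom}$.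 The basic actions are $f.m$ ($f\in\mathrm{Foci},m\in\mathrm{Meth}$) and $\mathsf{md}.m$ for the molecular dynamics methods $m$ below, where $\mathsf{md}$ is a focus name not in $\mathrm{Foci}$. A state is $\uparrow$ or a pair $\langle\sigma,\alpha\rangle$ with $\sigma:\mathrm{Spot}\to\mathrm{PAtom}\cup\{\bot\}$, $\alpha$ a map from a finite set $\mathrm{dom}(\alpha)\subseteq\mathrm{PAtom}$ (the atoms) assigning to each atom $a$ a map $\alpha(a)$ from a finite set of fields to $\mathrm{PAtom}\cup\{\bot\}$, with all values of $\sigma$ and of each $\alpha(a)$ in $\mathrm{dom}(\alpha)\cup\{\bot\}$. $t_{\mathrm{init}}$ is the state with $\mathrm{dom}(\alpha)=\emptyset$ (so $\sigma\equiv\bot$). For each method $m$ and state $t$ there is a new state $\mathrm{eff}(m,t)$ and a yield $\mathrm{yld}(m,t)\in\{T,F,M,B\}$; unless stated, the state is unchanged. In state $\langle\sigma,\alpha\rangle$ (with $s,s'\in\mathrm{Spot}$, $v\in\mathrm{Field}$; "$v$ is a field of $s$" means $\sigma(s)\ne\bot$ and $v\in\mathrm{dom}(\alpha(\sigma(s)))$): $\mathsf{create}(s)$: with $a=\mathrm{proatom}(n+1)$, $n=\max\{n' : \mathrm{proatom}(n')\in\mathrm{dom}(\alpha)\}$ ($\max\emptyset=0$), set $\sigma(s):=a$, add atom $a$ with no fields; yield $T$. $\mathsf{setspot}(s,s')$: $\sigma(s):=\sigma(s')$; $T$. $\mathsf{clearspot}(s)$: $\sigma(s):=\bot$; $T$.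 $\mathsf{equal}(s,s')$: yield $T$ iff $\sigma(s)=\sigma(s')$, else $F$. $\mathsf{undef}(s)$: $T$ iff $\sigma(s)=\bot$, else $F$. $\mathsf{addfield}(s,v)$: if $\sigma(s)\ne\bot$ and $v$ is not a field of $s$, add field $v$ with content $\bot$ to atom $\sigma(s)$, yield $T$; else $F$. $\mathsf{rmvfield}(s,v)$: if $v$ is a field of $s$, remove it, $T$; else $F$. $\mathsf{hasfield}(s,v)$: $T$ iff $v$ is a field of $s$, else $F$. $\mathsf{setfield}(s,v,s')$: if $v$ is a field of $s$, set $\alpha(\sigma(s))(v):=\sigma(s')$, $T$; else $F$. $\mathsf{getfield}(s,s',v)$: if $v$ is a field of $s'$, set $\sigma(s):=\alpha(\sigma(s'))(v)$, $T$; else $F$. $\mathsf{genact}(s,s')$: if $\sigma(s)\ne\bot$, $\sigma(s')\ne\bot$, some $f'\in\mathrm{Foci}$ has $\sigma(f')=\sigma(s)$ and some $m'\in\mathrm{Meth}$ has $\sigma(m')=\sigma(s')$: state unchanged, yield $M$, and the action is transformed into $f.m$ with $f$ the $\le$-least such $f'$ and $m$ the $\le$-least such $m'$; otherwise yield $B$ and new state $\uparrow$. In state $\uparrow$ every method yields $B$ and leads to $\uparrow$. $\mathrm{MDS}_t$ denotes the service in state $t$. Use operator. For a thread $p$ and state $t$, $p/_{\mathsf{md}}\mathrm{MDS}_t$ is determined by: $\mathsf S/\ldots=\mathsf S$; $\mathsf D/\ldots=\mathsf D$; $(\tau\circ x)/_{\mathsf{md}}\mathrm{MDS}_t=\tau\circ(x/_{\mathsf{md}}\mathrm{MDS}_t)$;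 $(x\unlhd g.m\unrhd y)/_{\mathsf{md}}\mathrm{MDS}_t=(x/_{\mathsf{md}}\mathrm{MDS}_t)\unlhd g.m\unrhd(y/_{\mathsf{md}}\mathrm{MDS}_t)$ for $g\ne\mathsf{md}$; for $a=\mathsf{md}.m$ and $t'=\mathrm{eff}(m,t)$: $(x\unlhd a\unrhd y)/_{\mathsf{md}}\mathrm{MDS}_t$ equals $\tau\circ(x/_{\mathsf{md}}\mathrm{MDS}_{t'})$ if the yield is $T$, $\tau\circ(y/_{\mathsf{md}}\mathrm{MDS}_{t'})$ if $F$, $(x\unlhd f.m'\unrhd y)/_{\mathsf{md}}\mathrm{MDS}_{t'}$ if $M$ with transformed action $f.m'$, and $\mathsf D$ if $B$; for infinite $p$, $\pi_n(p/_{\mathsf{md}}H)=\pi_n(\pi_n(p)/_{\mathsf{md}}H)$. Abstraction. $\tau_{\mathrm{tau}}(p)=\mathsf D$ if $p$ starts with infinitely many $\tau$'s; otherwise $\tau_{\mathrm{tau}}(\mathsf S)=\mathsf S$, $\tau_{\mathrm{tau}}(\mathsf D)=\mathsf D$, $\tau_{\mathrm{tau}}(\tau\circ x)=\tau_{\mathrm{tau}}(x)$, $\tau_{\mathrm{tau}}(x\unlhd a\unrhd y)=\tau_{\mathrm{tau}}(x)\unlhd a\unrhd\tau_{\mathrm{tau}}(y)$ for $a\ne\tau$. Representation. Fix pairwise distinct spots $s,u,v,s_1,\ldots,s_{k+2}\in\mathrm{Spot}\setminus(\mathrm{Foci}\cup\mathrm{Meth})$. In the PGA programs below every instruction has focus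 $\mathsf{md}$ (omitted). For $P=u_1;\ldots;u_k$ with distinct occurring foci $f_1,\ldots,f_n$ and distinct occurring methods $m_1,\ldots,m_{n'}$: $\mathrm{pgldmd}(P)=\mathsf{create}(f_1);\ldots;\mathsf{create}(f_n);\mathsf{create}(m_1);\ldots;\mathsf{create}(m_{n'});\mathsf{create}(s_1);\ldots;\mathsf{create}(s_{k+2});\rho_1(u_1);\ldots;\rho_k(u_k);\mathsf{addfield}(s_{k+1},\mathsf{stop});\mathsf{addfield}(s_{k+2},\mathsf{stop});\mathsf{setspot}(s,s_1);!$, where for $u_j\in\{f.m,+f.m,-f.m\}$, $\rho_j(u_j)=\mathsf{addfield}(s_j,\mathsf{focus});\mathsf{addfield}(s_j,\mathsf{method});\mathsf{addfield}(s_j,\mathsf{pos});\mathsf{addfield}(s_j,\mathsf{neg});\mathsf{setfield}(s_j,\mathsf{focus},f);\mathsf{setfield}(s_j,\mathsf{method},m);\mathsf{setfield}(s_j,\mathsf{pos},s_{p});\mathsf{setfield}(s_j,\mathsf{neg},s_{q})$ with $(p,q)=(j+1,j+1)$ for $f.m$, $(j+1,j+2)$ for $+f.m$, $(j+2,j+1)$ for $-f.m$; $\rho_j(\#\#l)=\mathsf{addfield}(s_j,\mathsf{ajmp});\mathsf{setfield}(s_j,\mathsf{ajmp},s_l)$ if $1\le l\le k$, and $\rho_j(\#\#l)=\mathsf{addfield}(s_j,\mathsf{stop})$ otherwise. Interpreter. $I=(+\mathsf{hasfield}(s,\mathsf{stop});!;+\mathsf{hasfield}(s,\mathsf{ajmp});\#9;\mathsf{getfield}(u,s,\mathsf{focus});\mathsf{getfield}(v,s,\mathsf{method});+\mathsf{genact}(u,v);\#3;\mathsf{getfield}(s,s,\mathsf{neg});\#4;\mathsf{getfield}(s,s,\mathsf{pos});\#2;\mathsf{getfield}(s,s,\mathsf{ajmp}))^\omega$,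 all instructions with focus $\mathsf{md}$. *)

theory Defs
  imports Main
begin

section \<open>Threads (projective limit model)\<close>

text \<open>Finite threads over basic actions 'a. The postconditional composition
  with the silent action tau is always of the form tau o x, represented by TauP.\<close>
datatype 'a fthr = S | D | Post "'a fthr" 'a "'a fthr" | TauP "'a fthr"

fun proj :: "nat \<Rightarrow> 'a fthr \<Rightarrow> 'a fthr" where
  "proj 0 _ = D"
| "proj (Suc n) S = S"
| "proj (Suc n) D = D"
| "proj (Suc n) (Post x a y) = Post (proj n x) a (proj n y)"
| "proj (Suc n) (TauP x) = TauP (proj n x)"

text \<open>A thread of the projective limit model is represented by its sequence of
  projections p n = pi_n(thread). Two threads are equal iff all projections are
  equal, i.e. iff the sequences are equal.\<close>
type_synonym 'a thread = "nat \<Rightarrow> 'a fthr"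

section \<open>PGA\<close>

datatype 'a pga_instr = Basic 'a | Pos 'a | Neg 'a | Jmp nat | Halt

text \<open>A PGA program is (xs, ys): the finite program xs if ys = [], and the
  eventually periodic program xs; ys^omega otherwise.\<close>
type_synonym 'a pga = "'a pga_instr list \<times> 'a pga_instr list"

definition instr_at :: "'a pga \<Rightarrow> nat \<Rightarrow> 'a pga_instr option" where
  "instr_at X i = (case X of (xs, ys) \<Rightarrow>
     if i = 0 then None
     else if i \<le> length xs then Some (xs ! (i - 1))
     else if ys = [] then None
     else Some (ys ! ((i - 1 - length xs) mod length ys)))"

definition fwd_jump :: "'a pga \<Rightarrow> nat \<Rightarrow> bool" where
  "fwd_jump X i = (\<exists>l>0. instr_at X i = Some (Jmp l))"

definition jnext :: "'a pga \<Rightarrow> nat \<Rightarrow> nat" where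
  "jnext X i = (case instr_at X i of Some (Jmp l) \<Rightarrow> i + l | _ \<Rightarrow> i)"

text \<open>approx X n i = pi_n(T_i).\<close>
fun approx :: "'a pga \<Rightarrow> nat \<Rightarrow> nat \<Rightarrow> 'a fthr" where
  "approx X 0 i = D"
| "approx X (Suc n) i =
    (if (\<forall>j. fwd_jump X ((jnext X ^^ j) i)) then D
     else (let e = (jnext X ^^ (LEAST j. \<not> fwd_jump X ((jnext X ^^ j) i))) i in
       (case instr_at X e of
          None \<Rightarrow> D
        | Some Halt \<Rightarrow> S
        | Some (Jmp l) \<Rightarrow> D
        | Some (Basic a) \<Rightarrow> Post (approx X n (Suc e)) a (approx X n (Suc e))
        | Some (Pos a) \<Rightarrow> Post (approx X n (Suc e)) a (approx X n (Suc (Suc e)))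
        | Some (Neg a) \<Rightarrow> Post (approx X n (Suc (Suc e))) a (approx X n (Suc e)))))"

definition pga_beh :: "'a pga \<Rightarrow> 'a thread" where
  "pga_beh X = (\<lambda>n. approx X n 1)"

section \<open>PGLD\<close>

datatype 'a pgld_instr = LBasic 'a | LPos 'a | LNeg 'a | LAJmp nat

definition psi :: "nat \<Rightarrow> nat \<Rightarrow> 'a pgld_instr \<Rightarrow> 'a pga_instr" where
  "psi k j u = (case u of
      LBasic a \<Rightarrow> Basic a | LPos a \<Rightarrow> Pos a | LNeg a \<Rightarrow> Neg a
    | LAJmp l \<Rightarrow> (if j \<le> l \<and> l \<le> k then Jmp (l - j)
                  else if 0 < l \<and> l < j then Jmp (k + 2 - (j - l))
                  else Halt))"

definition pgld_beh :: "'a pgld_instr list \<Rightarrow> 'a thread" where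
  "pgld_beh P = pga_beh ([], map (\<lambda>(j, u). psi (length P) j u) (zip [1..<length P + 1] P)
                              @ [Halt, Halt])"

definition instr_act :: "'a pgld_instr \<Rightarrow> 'a option" where
  "instr_act u = (case u of LBasic a \<Rightarrow> Some a | LPos a \<Rightarrow> Some a | LNeg a \<Rightarrow> Some a
                  | LAJmp _ \<Rightarrow> None)"

section \<open>Molecular dynamics\<close>

text \<open>Proto-atoms are the positive naturals, proatom = id; bot is None.\<close>

datatype ('s, 'fld) mdmeth =
    Create 's | Setspot 's 's | Clearspot 's | Equal 's 's | Undef 's
  | Addfield 's 'fld | Rmvfield 's 'fld | Hasfield 's 'fld
  | Setfield 's 'fld 's | Getfield 's 's 'fld | Genact 's 's

text \<open>Basic actions: f.m (FM f m) and md.m (MD m).\<close>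
datatype ('s, 'fld) act = FM 's 's | MD "('s, 'fld) mdmeth"

text \<open>Fields of an atom: 'fld => nat option option; None = not a field,
  Some None = field with content bot, Some (Some b) = content b.\<close>
datatype ('s, 'fld) mdstate = Up
  | St "'s \<Rightarrow> nat option" "nat \<Rightarrow> ('fld \<Rightarrow> nat option option) option"

definition t_init :: "('s, 'fld) mdstate" where
  "t_init = St (\<lambda>_. None) (\<lambda>_. None)"

datatype 's yld = YT | YF | YM 's 's | YB

definition fields_of :: "('s \<Rightarrow> nat option) \<Rightarrow> (nat \<Rightarrow> ('fld \<Rightarrow> nat option option) option)
    \<Rightarrow> 's \<Rightarrow> 'fld \<Rightarrow> nat option option" where
  "fields_of \<sigma> \<alpha> s = (case \<sigma> s of None \<Rightarrow> (\<lambda>_. None)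
                        | Some a \<Rightarrow> (case \<alpha> a of None \<Rightarrow> (\<lambda>_. None) | Some fm \<Rightarrow> fm))"

definition is_field :: "('s \<Rightarrow> nat option) \<Rightarrow> (nat \<Rightarrow> ('fld \<Rightarrow> nat option option) option)
    \<Rightarrow> 's \<Rightarrow> 'fld \<Rightarrow> bool" where
  "is_field \<sigma> \<alpha> s v = (\<sigma> s \<noteq> None \<and> fields_of \<sigma> \<alpha> s v \<noteq> None)"

text \<open>md_step Foci Meth m t = (yld(m,t), eff(m,t)); the yield YM f m' carries the
  transformed action f.m'.\<close>
fun md_step :: "'s::linorder set \<Rightarrow> 's set \<Rightarrow> ('s, 'fld) mdmeth \<Rightarrow> ('s, 'fld) mdstate
    \<Rightarrow> 's yld \<times> ('s, 'fld) mdstate" where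
  "md_step Fo Me m Up = (YB, Up)"
| "md_step Fo Me (Create s) (St \<sigma> \<alpha>) =
    (let a = Suc (if dom \<alpha> = {} then 0 else Max (dom \<alpha>))
     in (YT, St (\<sigma>(s := Some a)) (\<alpha>(a := Some (\<lambda>_. None)))))"
| "md_step Fo Me (Setspot s s') (St \<sigma> \<alpha>) = (YT, St (\<sigma>(s := \<sigma> s')) \<alpha>)"
| "md_step Fo Me (Clearspot s) (St \<sigma> \<alpha>) = (YT, St (\<sigma>(s := None)) \<alpha>)"
| "md_step Fo Me (Equal s s') (St \<sigma> \<alpha>) = (if \<sigma> s = \<sigma> s' then YT else YF, St \<sigma> \<alpha>)"
| "md_step Fo Me (Undef s) (St \<sigma> \<alpha>) = (if \<sigma> s = None then YT else YF, St \<sigma> \<alpha>)"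
| "md_step Fo Me (Addfield s v) (St \<sigma> \<alpha>) =
    (if \<sigma> s \<noteq> None \<and> \<not> is_field \<sigma> \<alpha> s v
     then (YT, St \<sigma> (\<alpha>(the (\<sigma> s) := Some ((fields_of \<sigma> \<alpha> s)(v := Some None)))))
     else (YF, St \<sigma> \<alpha>))"
| "md_step Fo Me (Rmvfield s v) (St \<sigma> \<alpha>) =
    (if is_field \<sigma> \<alpha> s v
     then (YT, St \<sigma> (\<alpha>(the (\<sigma> s) := Some ((fields_of \<sigma> \<alpha> s)(v := None)))))
     else (YF, St \<sigma> \<alpha>))"
| "md_step Fo Me (Hasfield s v) (St \<sigma> \<alpha>) = (if is_field \<sigma> \<alpha> s v then YT else YF, St \<sigma> \<alpha>)"
| "md_step Fo Me (Setfield s v s') (St \<sigma> \<alpha>) =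
    (if is_field \<sigma> \<alpha> s v
     then (YT, St \<sigma> (\<alpha>(the (\<sigma> s) := Some ((fields_of \<sigma> \<alpha> s)(v := Some (\<sigma> s'))))))
     else (YF, St \<sigma> \<alpha>))"
| "md_step Fo Me (Getfield s s' v) (St \<sigma> \<alpha>) =
    (if is_field \<sigma> \<alpha> s' v
     then (YT, St (\<sigma>(s := the (fields_of \<sigma> \<alpha> s' v))) \<alpha>)
     else (YF, St \<sigma> \<alpha>))"
| "md_step Fo Me (Genact s s') (St \<sigma> \<alpha>) =
    (if \<sigma> s \<noteq> None \<and> \<sigma> s' \<noteq> None \<and> (\<exists>f\<in>Fo. \<sigma> f = \<sigma> s) \<and> (\<exists>m\<in>Me. \<sigma> m = \<sigma> s')
     then (YM (Min {f\<in>Fo. \<sigma> f = \<sigma> s}) (Min {m\<in>Me. \<sigma> m = \<sigma> s'}), St \<sigma> \<alpha>)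
     else (YB, Up))"

section \<open>Use operator\<close>

fun use_fin :: "'s::linorder set \<Rightarrow> 's set \<Rightarrow> ('s, 'fld) act fthr \<Rightarrow> ('s, 'fld) mdstate
    \<Rightarrow> ('s, 'fld) act fthr" where
  "use_fin Fo Me S t = S"
| "use_fin Fo Me D t = D"
| "use_fin Fo Me (TauP x) t = TauP (use_fin Fo Me x t)"
| "use_fin Fo Me (Post x (FM f m) y) t = Post (use_fin Fo Me x t) (FM f m) (use_fin Fo Me y t)"
| "use_fin Fo Me (Post x (MD m) y) t =
    (case md_step Fo Me m t of
       (YT, t') \<Rightarrow> TauP (use_fin Fo Me x t')
     | (YF, t') \<Rightarrow> TauP (use_fin Fo Me y t')
     | (YM f m', t') \<Rightarrow> Post (use_fin Fo Me x t') (FM f m') (use_fin Fo Me y t')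
     | (YB, _) \<Rightarrow> D)"

text \<open>pi_n(p /md MDS_t) = pi_n(pi_n(p) /md MDS_t).\<close>
definition use_md :: "'s::linorder set \<Rightarrow> 's set \<Rightarrow> ('s, 'fld) act thread \<Rightarrow> ('s, 'fld) mdstate
    \<Rightarrow> ('s, 'fld) act thread" where
  "use_md Fo Me p t = (\<lambda>n. proj n (use_fin Fo Me (p n) t))"

section \<open>Abstraction tau_tau\<close>

definition ttail :: "'a thread \<Rightarrow> 'a thread" where
  "ttail p = (\<lambda>m. case p (Suc m) of TauP z \<Rightarrow> z | _ \<Rightarrow> D)"
definition tleft :: "'a thread \<Rightarrow> 'a thread" where
  "tleft p = (\<lambda>m. case p (Suc m) of Post x a y \<Rightarrow> x | _ \<Rightarrow> D)"
definition tright :: "'a thread \<Rightarrow> 'a thread" where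
  "tright p = (\<lambda>m. case p (Suc m) of Post x a y \<Rightarrow> y | _ \<Rightarrow> D)"

definition head_tau :: "'a thread \<Rightarrow> bool" where
  "head_tau p = (\<exists>z. p 1 = TauP z)"

definition inf_tau :: "'a thread \<Rightarrow> bool" where
  "inf_tau p = (\<forall>k. head_tau ((ttail ^^ k) p))"

text \<open>tt n p = pi_n(tau_tau(p)).\<close>
fun tt :: "nat \<Rightarrow> 'a thread \<Rightarrow> 'a fthr" where
  "tt 0 p = D"
| "tt (Suc n) p =
    (if inf_tau p then D
     else (let q = (ttail ^^ (LEAST k. \<not> head_tau ((ttail ^^ k) p))) p in
       (case q 1 of S \<Rightarrow> S | D \<Rightarrow> D
        | Post _ a _ \<Rightarrow> Post (tt n (tleft q)) a (tt n (tright q))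
        | TauP _ \<Rightarrow> D)))"

definition tau_abs :: "'a thread \<Rightarrow> 'a thread" where
  "tau_abs p = (\<lambda>n. tt n p)"

section \<open>Representation and interpreter\<close>

datatype fname = FStop | FAjmp | FFocus | FMethod | FPos | FNeg

definition rho_act :: "(fname \<Rightarrow> 'fld) \<Rightarrow> (nat \<Rightarrow> 's) \<Rightarrow> nat \<Rightarrow> 's \<Rightarrow> 's \<Rightarrow> nat \<Rightarrow> nat
    \<Rightarrow> ('s, 'fld) mdmeth list" where
  "rho_act fld sp j f m p q =
    [Addfield (sp j) (fld FFocus), Addfield (sp j) (fld FMethod),
     Addfield (sp j) (fld FPos), Addfield (sp j) (fld FNeg),
     Setfield (sp j) (fld FFocus) f, Setfield (sp j) (fld FMethod) m,
     Setfield (sp j) (fld FPos) (sp p), Setfield (sp j) (fld FNeg) (sp q)]"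

definition rho :: "(fname \<Rightarrow> 'fld) \<Rightarrow> (nat \<Rightarrow> 's) \<Rightarrow> nat \<Rightarrow> nat \<Rightarrow> ('s, 'fld) act pgld_instr
    \<Rightarrow> ('s, 'fld) mdmeth list" where
  "rho fld sp k j u = (case u of
      LBasic (FM f m) \<Rightarrow> rho_act fld sp j f m (j + 1) (j + 1)
    | LPos (FM f m) \<Rightarrow> rho_act fld sp j f m (j + 1) (j + 2)
    | LNeg (FM f m) \<Rightarrow> rho_act fld sp j f m (j + 2) (j + 1)
    | LAJmp l \<Rightarrow> (if 1 \<le> l \<and> l \<le> k
                  then [Addfield (sp j) (fld FAjmp), Setfield (sp j) (fld FAjmp) (sp l)]
                  else [Addfield (sp j) (fld FStop)])
    | _ \<Rightarrow> [])"

text \<open>pgldmd(P) as a finite PGA program, all instructions with focus md.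
  fs, ms: the enumerations f_1..f_n and m_1..m_n' of occurring foci/methods.\<close>
definition pgldmd :: "(fname \<Rightarrow> 'fld) \<Rightarrow> (nat \<Rightarrow> 's) \<Rightarrow> 's \<Rightarrow> 's list \<Rightarrow> 's list
    \<Rightarrow> ('s, 'fld) act pgld_instr list \<Rightarrow> ('s, 'fld) act pga_instr list" where
  "pgldmd fld sp s fs ms P =
    (let k = length P in
     map (\<lambda>x. Basic (MD (Create x))) (fs @ ms @ map sp [1..<k + 3])
     @ map (\<lambda>m. Basic (MD m)) (concat (map (\<lambda>(j, u). rho fld sp k j u) (zip [1..<k + 1] P)))
     @ [Basic (MD (Addfield (sp (k + 1)) (fld FStop))),
        Basic (MD (Addfield (sp (k + 2)) (fld FStop))),
        Basic (MD (Setspot s (sp 1))), Halt])"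

text \<open>State reached by applying eff successively for the methods of the basic
  md-instructions of a straight-line program (as pgldmd(P) is).\<close>
definition run_md :: "'s::linorder set \<Rightarrow> 's set \<Rightarrow> ('s, 'fld) act pga_instr list
    \<Rightarrow> ('s, 'fld) mdstate \<Rightarrow> ('s, 'fld) mdstate" where
  "run_md Fo Me X t0 = foldl (\<lambda>t i. case i of Basic (MD m) \<Rightarrow> snd (md_step Fo Me m t) | _ \<Rightarrow> t) t0 X"

definition interp :: "(fname \<Rightarrow> 'fld) \<Rightarrow> 's \<Rightarrow> 's \<Rightarrow> 's \<Rightarrow> ('s, 'fld) act pga" where
  "interp fld s u v = ([],
    [Pos (MD (Hasfield s (fld FStop))), Halt, Pos (MD (Hasfield s (fld FAjmp))), Jmp 9,
     Basic (MD (Getfield u s (fld FFocus))), Basic (MD (Getfield v s (fld FMethod))),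
     Pos (MD (Genact u v)), Jmp 3, Basic (MD (Getfield s s (fld FNeg))), Jmp 4,
     Basic (MD (Getfield s s (fld FPos))), Jmp 2, Basic (MD (Getfield s s (fld FAjmp)))])"

definition foci_of :: "('s, 'fld) act pgld_instr list \<Rightarrow> 's set" where
  "foci_of P = {f. \<exists>u\<in>set P. \<exists>m. instr_act u = Some (FM f m)}"

definition meths_of :: "('s, 'fld) act pgld_instr list \<Rightarrow> 's set" where
  "meths_of P = {m. \<exists>u\<in>set P. \<exists>f. instr_act u = Some (FM f m)}"

end

theory Submission
  imports Defs
begin


lemma approx_nonjump:
  assumes "\<not> fwd_jump X i"
  shows "approx X (Suc n) i = (case instr_at X i of
          None \<Rightarrow> D
        | Some Halt \<Rightarrow> S
        | Some (Jmp l) \<Rightarrow> D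
        | Some (Basic a) \<Rightarrow> Post (approx X n (Suc i)) a (approx X n (Suc i))
        | Some (Pos a) \<Rightarrow> Post (approx X n (Suc i)) a (approx X n (Suc (Suc i)))
        | Some (Neg a) \<Rightarrow> Post (approx X n (Suc (Suc i))) a (approx X n (Suc i)))"
proof -
  have 1: "(\<forall>j. fwd_jump X ((jnext X ^^ j) i)) = False" using assms by (metis funpow_0)
  have 2: "(LEAST j. \<not> fwd_jump X ((jnext X ^^ j) i)) = 0"
    by (rule Least_eq_0) (simp add: assms)
  show ?thesis unfolding approx.simps Let_def 1 2 funpow_0 if_False by (rule refl)
qed

lemma approx_jump:
  assumes "fwd_jump X i"
  shows "approx X (Suc n) i = approx X (Suc n) (jnext X i)"
proof -
  have eq: "\<And>j. (jnext X ^^ Suc j) i = (jnext X ^^ j) (jnext X i)"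
    by (simp add: funpow_Suc_right del: funpow.simps)
  have A: "(\<forall>j. fwd_jump X ((jnext X ^^ j) i)) \<longleftrightarrow> (\<forall>j. fwd_jump X ((jnext X ^^ j) (jnext X i)))"
  proof
    assume "\<forall>j. fwd_jump X ((jnext X ^^ j) i)"
    then show "\<forall>j. fwd_jump X ((jnext X ^^ j) (jnext X i))" by (metis eq)
  next
    assume h: "\<forall>j. fwd_jump X ((jnext X ^^ j) (jnext X i))"
    show "\<forall>j. fwd_jump X ((jnext X ^^ j) i)"
    proof
      fix j show "fwd_jump X ((jnext X ^^ j) i)"
        using h assms eq by (cases j) auto
    qed
  qed
  show ?thesis
  proof (cases "\<forall>j. fwd_jump X ((jnext X ^^ j) i)")
    case True
    then show ?thesis using A by simp
  next
    case False
    then have ex: "\<exists>j. \<not> fwd_jump X ((jnext X ^^ j) i)" by blast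
    then obtain j0 where j0: "\<not> fwd_jump X ((jnext X ^^ j0) i)" by blast
    have L: "(LEAST j. \<not> fwd_jump X ((jnext X ^^ j) i)) = Suc (LEAST j. \<not> fwd_jump X ((jnext X ^^ j) (jnext X i)))"
      by (subst Least_Suc[of "\<lambda>j. \<not> fwd_jump X ((jnext X ^^ j) i)" j0, OF j0]) (use assms eq in auto)
    have "(jnext X ^^ (LEAST j. \<not> fwd_jump X ((jnext X ^^ j) i))) i
        = (jnext X ^^ (LEAST j. \<not> fwd_jump X ((jnext X ^^ j) (jnext X i)))) (jnext X i)"
      using L eq by simp
    then show ?thesis using False A by (simp only: approx.simps Let_def)
  qed
qed

lemma jnext_ge: "i \<le> jnext X i"
  by (auto simp: jnext_def split: option.splits pga_instr.splits)

lemma instr_at_period: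
  assumes "ys \<noteq> []" "1 \<le> i"
  shows "instr_at ([], ys) (i + length ys) = instr_at ([], ys) i"
proof -
  have "(i + length ys - 1) = (i - 1) + length ys" using assms by simp
  then have "(i + length ys - 1) mod length ys = (i - 1) mod length ys" by simp
  then show ?thesis using assms by (simp add: instr_at_def)
qed

lemma jnext_period:
  assumes "ys \<noteq> []" "1 \<le> i"
  shows "jnext ([], ys) (i + length ys) = jnext ([], ys) i + length ys"
    and "fwd_jump ([], ys) (i + length ys) = fwd_jump ([], ys) i"
  using instr_at_period[OF assms]
  by (auto simp: jnext_def fwd_jump_def split: option.splits pga_instr.splits)

lemma funpow_jnext_period:
  assumes "ys \<noteq> []" "1 \<le> i"
  shows "(jnext ([], ys) ^^ j) (i + length ys) = (jnext ([], ys) ^^ j) i + length ys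
        \<and> 1 \<le> (jnext ([], ys) ^^ j) i"
proof (induction j)
  case 0 then show ?case using assms by simp
next
  case (Suc j)
  then show ?case using jnext_period(1)[OF assms(1), of "(jnext ([], ys) ^^ j) i"]
      jnext_ge[of "(jnext ([], ys) ^^ j) i" "([], ys)"] by auto
qed

lemma approx_period:
  assumes "ys \<noteq> []"
  shows "1 \<le> i \<Longrightarrow> approx ([], ys) n (i + length ys) = approx ([], ys) n i"
proof (induction n arbitrary: i)
  case 0 then show ?case by simp
next
  case (Suc n)
  have fp: "\<And>j. (jnext ([], ys) ^^ j) (i + length ys) = (jnext ([], ys) ^^ j) i + length ys"
    using funpow_jnext_period[OF assms Suc.prems] by blast
  have ge: "\<And>j. 1 \<le> (jnext ([], ys) ^^ j) i"
    using funpow_jnext_period[OF assms Suc.prems] by blast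
  have fw: "\<And>j. fwd_jump ([], ys) ((jnext ([], ys) ^^ j) (i + length ys)) = fwd_jump ([], ys) ((jnext ([], ys) ^^ j) i)"
    using fp ge jnext_period(2)[OF assms] by simp
  have ia: "\<And>j. instr_at ([], ys) ((jnext ([], ys) ^^ j) (i + length ys)) = instr_at ([], ys) ((jnext ([], ys) ^^ j) i)"
    using fp ge instr_at_period[OF assms] by simp
  have ih: "\<And>j. approx ([], ys) n (Suc ((jnext ([], ys) ^^ j) (i + length ys))) = approx ([], ys) n (Suc ((jnext ([], ys) ^^ j) i))"
     "\<And>j. approx ([], ys) n (Suc (Suc ((jnext ([], ys) ^^ j) (i + length ys)))) = approx ([], ys) n (Suc (Suc ((jnext ([], ys) ^^ j) i)))"
    using fp Suc.IH ge by (metis add_Suc le_Suc_eq le_add1)+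
  show ?case unfolding approx.simps Let_def fw ia ih by (rule refl)
qed

lemma ttail_tau: "\<forall>m. p (Suc m) = TauP (q m) \<Longrightarrow> ttail p = q"
  by (auto simp: ttail_def)

lemma head_tau_tau: "\<forall>m. p (Suc m) = TauP (q m) \<Longrightarrow> head_tau p"
  by (auto simp: head_tau_def)

lemma tt_tau:
  assumes h: "\<forall>m. p (Suc m) = TauP (q m)"
  shows "tt n p = tt n q"
proof (cases n)
  case 0 then show ?thesis by simp
next
  case (Suc n')
  have tl: "ttail p = q" using ttail_tau[OF h] .
  have hd: "head_tau p" using head_tau_tau[OF h] .
  have eq: "\<And>k. (ttail ^^ Suc k) p = (ttail ^^ k) q"
    using tl by (simp add: funpow_Suc_right del: funpow.simps)
  have inf: "inf_tau p = inf_tau q"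
    unfolding inf_tau_def
  proof
    assume "\<forall>k. head_tau ((ttail ^^ k) p)" then show "\<forall>k. head_tau ((ttail ^^ k) q)" by (metis eq)
  next
    assume a: "\<forall>k. head_tau ((ttail ^^ k) q)"
    show "\<forall>k. head_tau ((ttail ^^ k) p)"
    proof
      fix k show "head_tau ((ttail ^^ k) p)" using a hd eq by (cases k) auto
    qed
  qed
  show ?thesis
  proof (cases "inf_tau q")
    case True then show ?thesis using inf Suc by simp
  next
    case False
    then obtain k0 where k0: "\<not> head_tau ((ttail ^^ k0) q)" unfolding inf_tau_def by blast
    have k0': "\<not> head_tau ((ttail ^^ Suc k0) p)" using k0 eq by simp
    have L: "(LEAST k. \<not> head_tau ((ttail ^^ k) p)) = Suc (LEAST k. \<not> head_tau ((ttail ^^ k) q))"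
      by (subst Least_Suc[of "\<lambda>k. \<not> head_tau ((ttail ^^ k) p)", OF k0']) (use hd eq in auto)
    have "(ttail ^^ (LEAST k. \<not> head_tau ((ttail ^^ k) p))) p = (ttail ^^ (LEAST k. \<not> head_tau ((ttail ^^ k) q))) q"
      using L eq by simp
    then show ?thesis using False inf Suc by (simp only: tt.simps Let_def)
  qed
qed

lemma tt_post:
  assumes h: "\<forall>m. p (Suc m) = Post (x m) a (y m)"
  shows "tt (Suc n) p = Post (tt n x) a (tt n y)"
proof -
  have nh: "\<not> head_tau p" using h by (simp add: head_tau_def)
  have ni: "inf_tau p = False" using nh unfolding inf_tau_def by (metis funpow_0)
  have L: "(LEAST k. \<not> head_tau ((ttail ^^ k) p)) = 0" by (rule Least_eq_0) (simp add: nh)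
  have tl: "tleft p = x" "tright p = y" using h by (auto simp: tleft_def tright_def)
  show ?thesis unfolding tt.simps ni L Let_def funpow_0 if_False using h tl by simp
qed

lemma tt_S:
  assumes h: "\<forall>m. p (Suc m) = S"
  shows "tt (Suc n) p = S"
proof -
  have nh: "\<not> head_tau p" using h by (simp add: head_tau_def)
  have ni: "inf_tau p = False" using nh unfolding inf_tau_def by (metis funpow_0)
  have L: "(LEAST k. \<not> head_tau ((ttail ^^ k) p)) = 0" by (rule Least_eq_0) (simp add: nh)
  show ?thesis unfolding tt.simps ni L Let_def funpow_0 if_False using h by simp
qed

lemma tt_inf: "inf_tau p \<Longrightarrow> tt n p = D"
  by (cases n) auto

lemma inf_tau_closed:
  assumes cl: "\<forall>p\<in>M. head_tau p \<and> ttail p \<in> M" and pM: "p \<in> M"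
  shows "inf_tau p"
proof -
  have "\<forall>p\<in>M. (ttail ^^ k) p \<in> M" for k
  proof (induction k)
    case 0 then show ?case by simp
  next
    case (Suc k) then show ?case using cl by (simp add: funpow_Suc_right del: funpow.simps)
  qed
  then show ?thesis using pM cl unfolding inf_tau_def by blast
qed

lemma approx_D_closed:
  assumes cl: "\<forall>p\<in>M. instr_at X p = Some (Jmp 0) \<or> (fwd_jump X p \<and> jnext X p \<in> M)"
    and iM: "i \<in> M"
  shows "approx X (Suc n) i = D"
proof (cases "\<forall>j. fwd_jump X ((jnext X ^^ j) i)")
  case True then show ?thesis by simp
next
  case False
  define L where "L = (LEAST j. \<not> fwd_jump X ((jnext X ^^ j) i))"
  have nL: "\<not> fwd_jump X ((jnext X ^^ L) i)" unfolding L_def using False by (metis (mono_tags, lifting) LeastI)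
  have lt: "\<And>j. j < L \<Longrightarrow> fwd_jump X ((jnext X ^^ j) i)" unfolding L_def using not_less_Least by blast
  have "\<And>j. j \<le> L \<Longrightarrow> (jnext X ^^ j) i \<in> M"
  proof -
    fix j show "j \<le> L \<Longrightarrow> (jnext X ^^ j) i \<in> M"
    proof (induction j)
      case 0 then show ?case using iM by simp
    next
      case (Suc j)
      then have "(jnext X ^^ j) i \<in> M" "fwd_jump X ((jnext X ^^ j) i)" using lt by auto
      then show ?case using cl by (force simp: fwd_jump_def)
    qed
  qed
  then have "(jnext X ^^ L) i \<in> M" by simp
  then have "instr_at X ((jnext X ^^ L) i) = Some (Jmp 0)" using cl nL by blast
  then show ?thesis using False unfolding L_def by (simp add: Let_def)
qed




definition runm :: "'s::linorder set \<Rightarrow> 's set \<Rightarrow> ('s, 'fld) mdmeth list \<Rightarrow> ('s, 'fld) mdstate \<Rightarrow> ('s, 'fld) mdstate" where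
  "runm Fo Me ms t = foldl (\<lambda>t m. snd (md_step Fo Me m t)) t ms"

lemma runm_Nil[simp]: "runm Fo Me [] t = t" by (simp add: runm_def)
lemma runm_Cons[simp]: "runm Fo Me (m # ms) t = runm Fo Me ms (snd (md_step Fo Me m t))" by (simp add: runm_def)
lemma runm_append[simp]: "runm Fo Me (ms @ ns) t = runm Fo Me ns (runm Fo Me ms t)" by (simp add: runm_def)

lemma run_md_map: "run_md Fo Me (map (\<lambda>m. Basic (MD m)) ms @ rest) t = run_md Fo Me rest (runm Fo Me ms t)"
  by (induction ms arbitrary: t) (simp_all add: run_md_def)

lemma create_run:
  "distinct L \<Longrightarrow> finite (dom \<alpha>) \<Longrightarrow> \<exists>g \<alpha>'. runm Fo Me (map Create L) (St \<sigma> \<alpha>) =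
     St (\<lambda>x. if x \<in> set L then Some (g x) else \<sigma> x) \<alpha>' \<and> inj_on g (set L)
   \<and> (\<forall>x\<in>set L. g x \<notin> dom \<alpha> \<and> \<alpha>' (g x) = Some (\<lambda>_. None))
   \<and> (\<forall>a. a \<notin> g ` set L \<longrightarrow> \<alpha>' a = \<alpha> a) \<and> finite (dom \<alpha>')"
proof (induction L arbitrary: \<sigma> \<alpha>)
  case Nil then show ?case by simp
next
  case (Cons x L)
  define a where "a = Suc (if dom \<alpha> = {} then 0 else Max (dom \<alpha>))"
  have anot: "a \<notin> dom \<alpha>"
  proof
    assume "a \<in> dom \<alpha>"
    then have "a \<le> Max (dom \<alpha>)" "dom \<alpha> \<noteq> {}" using Cons.prems by auto
    then show False unfolding a_def by simp
  qed
  have st: "runm Fo Me (map Create (x # L)) (St \<sigma> \<alpha>) = runm Fo Me (map Create L) (St (\<sigma>(x := Some a)) (\<alpha>(a := Some (\<lambda>_. None))))"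
    by (simp add: a_def Let_def)
  have fin: "finite (dom (\<alpha>(a := Some (\<lambda>_. None))))" using Cons.prems by simp
  have dL: "distinct L" using Cons.prems by simp
  obtain g \<alpha>' where IH: "runm Fo Me (map Create L) (St (\<sigma>(x := Some a)) (\<alpha>(a := Some (\<lambda>_. None)))) =
     St (\<lambda>y. if y \<in> set L then Some (g y) else (\<sigma>(x := Some a)) y) \<alpha>'" "inj_on g (set L)"
   "\<forall>y\<in>set L. g y \<notin> dom (\<alpha>(a := Some (\<lambda>_. None))) \<and> \<alpha>' (g y) = Some (\<lambda>_. None)"
   "\<forall>b. b \<notin> g ` set L \<longrightarrow> \<alpha>' b = (\<alpha>(a := Some (\<lambda>_. None))) b" "finite (dom \<alpha>')"
    using Cons.IH[OF dL fin, of "\<sigma>(x := Some a)"] by blast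
  have xL: "x \<notin> set L" using Cons.prems by simp
  define g' where "g' = g(x := a)"
  have aL: "a \<notin> g ` set L" using IH(3) by auto
  have e1: "(\<lambda>y. if y \<in> set L then Some (g y) else (\<sigma>(x := Some a)) y) = (\<lambda>y. if y \<in> set (x # L) then Some (g' y) else \<sigma> y)"
    using xL by (auto simp: g'_def)
  have "inj_on g' (set (x # L))" using IH(2) aL xL unfolding g'_def by (auto simp: inj_on_def)
  moreover have "\<forall>y\<in>set (x # L). g' y \<notin> dom \<alpha> \<and> \<alpha>' (g' y) = Some (\<lambda>_. None)"
    using IH(3,4) anot aL xL by (auto simp: g'_def split: if_splits)
  moreover have "\<forall>b. b \<notin> g' ` set (x # L) \<longrightarrow> \<alpha>' b = \<alpha> b"
    using IH(4) xL by (auto simp: g'_def)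
  ultimately show ?case using IH(5) unfolding st IH(1) e1 by blast
qed

definition fa :: "('s \<Rightarrow> nat option) \<Rightarrow> (fname \<Rightarrow> 'fld) \<Rightarrow> (nat \<Rightarrow> 's) \<Rightarrow> 's \<Rightarrow> 's \<Rightarrow> nat \<Rightarrow> nat \<Rightarrow> 'fld \<Rightarrow> nat option option" where
  "fa \<sigma> fld sp f m p q = (\<lambda>_. None)(fld FFocus := Some (\<sigma> f), fld FMethod := Some (\<sigma> m),
     fld FPos := Some (\<sigma> (sp p)), fld FNeg := Some (\<sigma> (sp q)))"

definition specf :: "('s \<Rightarrow> nat option) \<Rightarrow> (fname \<Rightarrow> 'fld) \<Rightarrow> (nat \<Rightarrow> 's) \<Rightarrow> nat \<Rightarrow> nat \<Rightarrow> ('s, 'fld) act pgld_instr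
    \<Rightarrow> 'fld \<Rightarrow> nat option option" where
  "specf \<sigma> fld sp K j u = (case u of
      LBasic (FM f m) \<Rightarrow> fa \<sigma> fld sp f m (j + 1) (j + 1)
    | LPos (FM f m) \<Rightarrow> fa \<sigma> fld sp f m (j + 1) (j + 2)
    | LNeg (FM f m) \<Rightarrow> fa \<sigma> fld sp f m (j + 2) (j + 1)
    | LAJmp l \<Rightarrow> (if 1 \<le> l \<and> l \<le> K then (\<lambda>_. None)(fld FAjmp := Some (\<sigma> (sp l)))
                  else (\<lambda>_. None)(fld FStop := Some None))
    | _ \<Rightarrow> (\<lambda>_. None))"

lemma rho_act_step:
  assumes "inj fld" "\<sigma> (sp j) = Some a" "\<alpha> a = Some (\<lambda>_. None)"
  shows "runm Fo Me (rho_act fld sp j f m p q) (St \<sigma> \<alpha>) = St \<sigma> (\<alpha>(a := Some (fa \<sigma> fld sp f m p q)))"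
proof -
  have d: "fld x = fld y \<longleftrightarrow> x = y" for x y using assms(1) by (simp add: inj_eq)
  show ?thesis using assms(2,3)
    by (simp add: rho_act_def is_field_def fields_of_def d fa_def)
qed

lemma rho_step:
  assumes "inj fld" "\<sigma> (sp j) = Some a" "\<alpha> a = Some (\<lambda>_. None)"
  shows "runm Fo Me (rho fld sp K j u) (St \<sigma> \<alpha>) = St \<sigma> (\<alpha>(a := Some (specf \<sigma> fld sp K j u)))"
proof -
  have d: "fld x = fld y \<longleftrightarrow> x = y" for x y using assms(1) by (simp add: inj_eq)
  have triv: "\<alpha>(a := Some (\<lambda>_. None)) = \<alpha>" using assms(3) by auto
  show ?thesis using assms rho_act_step[where fld=fld and \<sigma>=\<sigma> and sp=sp and j=j and a=a and \<alpha>=\<alpha>, OF assms] triv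
    apply (cases u)
    apply (auto simp: rho_def specf_def is_field_def fields_of_def d split: act.splits)
    done
qed

lemma fold_rho:
  assumes "inj fld"
  shows "\<forall>(j,u)\<in>set xs. \<sigma> (sp j) \<noteq> None \<and> \<alpha> (the (\<sigma> (sp j))) = Some (\<lambda>_. None) \<Longrightarrow>
    distinct (map (\<lambda>(j,u). the (\<sigma> (sp j))) xs) \<Longrightarrow>
    \<exists>\<alpha>'. runm Fo Me (concat (map (\<lambda>(j,u). rho fld sp K j u) xs)) (St \<sigma> \<alpha>) = St \<sigma> \<alpha>'
      \<and> (\<forall>(j,u)\<in>set xs. \<alpha>' (the (\<sigma> (sp j))) = Some (specf \<sigma> fld sp K j u))
      \<and> (\<forall>a. a \<notin> (\<lambda>(j,u). the (\<sigma> (sp j))) ` set xs \<longrightarrow> \<alpha>' a = \<alpha> a)"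
proof (induction xs arbitrary: \<alpha>)
  case Nil then show ?case by simp
next
  case (Cons x xs)
  obtain j u where x: "x = (j, u)" by (cases x)
  obtain a where a: "\<sigma> (sp j) = Some a" using Cons.prems x by auto
  have aa: "\<alpha> a = Some (\<lambda>_. None)" using Cons.prems x a by auto
  define \<alpha>1 where "\<alpha>1 = \<alpha>(a := Some (specf \<sigma> fld sp K j u))"
  have st: "runm Fo Me (rho fld sp K j u) (St \<sigma> \<alpha>) = St \<sigma> \<alpha>1"
    unfolding \<alpha>1_def by (rule rho_step[where \<sigma>=\<sigma> and sp=sp and j=j and a=a and \<alpha>=\<alpha>, OF assms a aa])
  have anot: "a \<notin> (\<lambda>(j,u). the (\<sigma> (sp j))) ` set xs" using Cons.prems(2) x a by auto
  have p1: "\<forall>(j,u)\<in>set xs. \<sigma> (sp j) \<noteq> None \<and> \<alpha>1 (the (\<sigma> (sp j))) = Some (\<lambda>_. None)"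
  proof (intro ballI, clarify)
    fix j' u' assume "(j', u') \<in> set xs"
    then show "\<sigma> (sp j') \<noteq> None \<and> \<alpha>1 (the (\<sigma> (sp j'))) = Some (\<lambda>_. None)"
      using Cons.prems(1) anot unfolding \<alpha>1_def by force
  qed
  have p2: "distinct (map (\<lambda>(j,u). the (\<sigma> (sp j))) xs)" using Cons.prems(2) by simp
  obtain \<alpha>' where IH: "runm Fo Me (concat (map (\<lambda>(j,u). rho fld sp K j u) xs)) (St \<sigma> \<alpha>1) = St \<sigma> \<alpha>'"
    "\<forall>(j,u)\<in>set xs. \<alpha>' (the (\<sigma> (sp j))) = Some (specf \<sigma> fld sp K j u)"
    "\<forall>b. b \<notin> (\<lambda>(j,u). the (\<sigma> (sp j))) ` set xs \<longrightarrow> \<alpha>' b = \<alpha>1 b"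
    using Cons.IH[OF p1 p2] by blast
  have r: "runm Fo Me (concat (map (\<lambda>(j,u). rho fld sp K j u) (x # xs))) (St \<sigma> \<alpha>) = St \<sigma> \<alpha>'"
    using st IH(1) x by simp
  have "\<forall>(j',u')\<in>set (x # xs). \<alpha>' (the (\<sigma> (sp j'))) = Some (specf \<sigma> fld sp K j' u')"
    using IH(2,3) anot x a unfolding \<alpha>1_def by auto
  moreover have "\<forall>b. b \<notin> (\<lambda>(j,u). the (\<sigma> (sp j))) ` set (x # xs) \<longrightarrow> \<alpha>' b = \<alpha> b"
    using IH(3) x a unfolding \<alpha>1_def by auto
  ultimately show ?case using r by blast
qed




locale pre =
  fixes Fo Me :: "'s::{finite,linorder} set"
    and fld :: "fname \<Rightarrow> 'fld::finite"
    and s u v :: 's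
    and sp :: "nat \<Rightarrow> 's"
    and P :: "('s, 'fld) act pgld_instr list"
    and fs ms :: "'s list"
  assumes A1: "Fo \<inter> Me = {}"
    and A2: "inj fld"
    and A3: "length P \<ge> 1"
    and A4: "\<forall>w\<in>set P. \<forall>a. instr_act w = Some a \<longrightarrow> (\<exists>f m. a = FM f m \<and> f \<in> Fo \<and> m \<in> Me)"
    and A5: "distinct (s # u # v # map sp [1..<length P + 3])"
    and A6: "\<forall>x\<in>{s, u, v} \<union> sp ` {1..length P + 2}. x \<notin> Fo \<union> Me"
    and A7: "distinct fs" and A8: "set fs = foci_of P"
    and A9: "distinct ms" and A10: "set ms = meths_of P"
begin

abbreviation "K \<equiv> length P"

lemma fs_Fo: "set fs \<subseteq> Fo"
  using A4 A8 unfolding foci_of_def by fastforce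
lemma ms_Me: "set ms \<subseteq> Me"
  using A4 A10 unfolding meths_of_def by fastforce

lemma sp_inj: "inj_on sp {1..<K + 3}"
  using A5 by (simp add: distinct_map)

lemma sp_range: "j \<in> {1..K+2} \<Longrightarrow> sp j \<notin> Fo \<and> sp j \<notin> Me \<and> sp j \<noteq> s \<and> sp j \<noteq> u \<and> sp j \<noteq> v"
  using A6 A5 by auto

lemma suv: "s \<noteq> u" "s \<noteq> v" "u \<noteq> v" "s \<notin> Fo" "u \<notin> Fo" "v \<notin> Fo" "s \<notin> Me" "u \<notin> Me" "v \<notin> Me"
  using A5 A6 by auto

definition Lc where "Lc = fs @ ms @ map sp [1..<K + 3]"

lemma Lc_distinct: "distinct Lc"
proof -
  have "set fs \<inter> set ms = {}" using fs_Fo ms_Me A1 by blast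
  moreover have "set fs \<inter> sp ` {1..<K+3} = {}" using fs_Fo sp_range by fastforce
  moreover have "set ms \<inter> sp ` {1..<K+3} = {}" using ms_Me sp_range by fastforce
  moreover have "distinct (map sp [1..<K + 3])" using A5 by simp
  ultimately show ?thesis using A7 A9 unfolding Lc_def by auto
qed

definition good :: "('s \<Rightarrow> nat option) \<Rightarrow> (nat \<Rightarrow> ('fld \<Rightarrow> nat option option) option) \<Rightarrow> bool" where
  "good \<sigma> \<alpha> \<longleftrightarrow> (\<forall>j\<in>{1..K+2}. \<sigma> (sp j) \<noteq> None)
    \<and> (\<forall>f\<in>set fs. \<sigma> f \<noteq> None \<and> (\<forall>f'\<in>Fo. \<sigma> f' = \<sigma> f \<longrightarrow> f' = f))
    \<and> (\<forall>m\<in>set ms. \<sigma> m \<noteq> None \<and> (\<forall>m'\<in>Me. \<sigma> m' = \<sigma> m \<longrightarrow> m' = m))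
    \<and> (\<forall>j\<in>{1..K}. fields_of \<sigma> \<alpha> (sp j) = specf \<sigma> fld sp K j (P ! (j - 1)))
    \<and> fields_of \<sigma> \<alpha> (sp (K+1)) = (\<lambda>_. None)(fld FStop := Some None)
    \<and> fields_of \<sigma> \<alpha> (sp (K+2)) = (\<lambda>_. None)(fld FStop := Some None)"

lemma run_good: "\<exists>\<sigma> \<alpha>. run_md Fo Me (pgldmd fld sp s fs ms P) t_init = St (\<sigma>(s := \<sigma> (sp 1))) \<alpha> \<and> good \<sigma> \<alpha>"
proof -
  obtain g and \<alpha>c :: "nat \<Rightarrow> ('fld \<Rightarrow> nat option option) option" where C: "runm Fo Me (map Create Lc) (St (\<lambda>_. None) (\<lambda>_. None)) =
     St (\<lambda>x. if x \<in> set Lc then Some (g x) else None) \<alpha>c" "inj_on g (set Lc)"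
   "\<forall>x\<in>set Lc. \<alpha>c (g x) = Some (\<lambda>_. None)"
    using create_run[OF Lc_distinct, of "\<lambda>_. None" Fo Me "\<lambda>_. None"] by auto
  define \<sigma> where "\<sigma> = (\<lambda>x. if x \<in> set Lc then Some (g x) else None)"
  have spL: "\<And>j. j \<in> {1..K+2} \<Longrightarrow> sp j \<in> set Lc" unfolding Lc_def by auto
  have \<sigma>sp: "\<And>j. j \<in> {1..K+2} \<Longrightarrow> \<sigma> (sp j) = Some (g (sp j))" using spL unfolding \<sigma>_def by auto
  define xs where "xs = zip [1..<K + 1] P"
  have xs_in: "\<And>j w. (j, w) \<in> set xs \<Longrightarrow> j \<in> {1..K} \<and> w = P ! (j - 1)"
    unfolding xs_def by (auto simp: set_zip simp del: upt_Suc)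
  have xs_in2: "(j, P ! (j - 1)) \<in> set xs" if j: "j \<in> {1..K}" for j
  proof -
    have jl: "j - 1 < K" using j by auto
    have "xs ! (j-1) = (j, P!(j-1))" unfolding xs_def using jl j by (simp del: upt_Suc)
    moreover have "j - 1 < length xs" unfolding xs_def using jl by (simp del: upt_Suc)
    ultimately
    show ?thesis by (metis nth_mem)
  qed
  have p1: "\<forall>(j,w)\<in>set xs. \<sigma> (sp j) \<noteq> None \<and> \<alpha>c (the (\<sigma> (sp j))) = Some (\<lambda>_. None)"
  proof (intro ballI, clarify)
    fix j w assume "(j,w) \<in> set xs"
    then have j: "j \<in> {1..K+2}" using xs_in by fastforce
    then have "\<sigma> (sp j) = Some (g (sp j))" "sp j \<in> set Lc" using \<sigma>sp spL by auto
    then show "\<sigma> (sp j) \<noteq> None \<and> \<alpha>c (the (\<sigma> (sp j))) = Some (\<lambda>_. None)" using C(3) by simp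
  qed
  have mapeq: "map (\<lambda>(j,w). the (\<sigma> (sp j))) xs = map (\<lambda>j. g (sp j)) [1..<K + 1]"
  proof -
    have "map (\<lambda>(j,w). the (\<sigma> (sp j))) xs = map (\<lambda>j. the (\<sigma> (sp j))) (map fst xs)"
      by (simp add: case_prod_beta)
    also have "map fst xs = [1..<K+1]" unfolding xs_def by (simp del: upt_Suc)
    also have "map (\<lambda>j. the (\<sigma> (sp j))) [1..<K+1] = map (\<lambda>j. g (sp j)) [1..<K + 1]"
      by (rule map_cong) (use \<sigma>sp in \<open>auto simp del: upt_Suc\<close>)
    finally show ?thesis .
  qed
  have injg: "inj_on (\<lambda>j. g (sp j)) {1..<K + 1}"
  proof (rule inj_onI)
    fix i j assume h: "i \<in> {1..<K+1}" "j \<in> {1..<K+1}" "g (sp i) = g (sp j)"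
    have "sp i \<in> set Lc" "sp j \<in> set Lc" using spL h by auto
    then have "sp i = sp j" using C(2) h(3) by (meson inj_onD)
    moreover have "i \<in> {1..<K+3}" "j \<in> {1..<K+3}" using h by auto
    ultimately show "i = j" using sp_inj by (meson inj_onD)
  qed
  have p2: "distinct (map (\<lambda>(j,w). the (\<sigma> (sp j))) xs)"
    unfolding mapeq using injg by (simp add: distinct_map del: upt_Suc)
  obtain \<alpha>1 where R: "runm Fo Me (concat (map (\<lambda>(j,u). rho fld sp K j u) xs)) (St \<sigma> \<alpha>c) = St \<sigma> \<alpha>1"
      "\<forall>(j,w)\<in>set xs. \<alpha>1 (the (\<sigma> (sp j))) = Some (specf \<sigma> fld sp K j w)"
      "\<forall>a. a \<notin> (\<lambda>(j,u). the (\<sigma> (sp j))) ` set xs \<longrightarrow> \<alpha>1 a = \<alpha>c a"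
    using fold_rho[OF A2 p1 p2, of Fo Me K] by blast
  define b1 where "b1 = g (sp (K+1))"
  define b2 where "b2 = g (sp (K+2))"
  have img: "(\<lambda>(j,u). the (\<sigma> (sp j))) ` set xs = (\<lambda>j. g (sp j)) ` {1..K}"
  proof -
    have "(\<lambda>(j,u). the (\<sigma> (sp j))) ` set xs = (\<lambda>j. the (\<sigma> (sp j))) ` fst ` set xs"
      by (simp add: image_image case_prod_beta)
    also have "fst ` set xs = {1..K}"
    proof -
      have "map fst xs = [1..<K+1]" unfolding xs_def by (simp del: upt_Suc)
      then have "fst ` set xs = set [1..<K+1]" by (metis set_map)
      then show ?thesis by (simp del: upt_Suc add: atLeastLessThanSuc_atLeastAtMost)
    qed
    finally show ?thesis using \<sigma>sp by auto
  qed
  have b_not: "b1 \<notin> (\<lambda>j. g (sp j)) ` {1..K}" "b2 \<notin> (\<lambda>j. g (sp j)) ` {1..K}" "b1 \<noteq> b2"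
  proof -
    have inj2: "inj_on (\<lambda>j. g (sp j)) {1..K+2}"
    proof (rule inj_onI)
      fix i j assume h: "i \<in> {1..K+2}" "j \<in> {1..K+2}" "g (sp i) = g (sp j)"
      have "sp i \<in> set Lc" "sp j \<in> set Lc" using spL h by auto
      then have "sp i = sp j" using C(2) h(3) by (meson inj_onD)
      moreover have "i \<in> {1..<K+3}" "j \<in> {1..<K+3}" using h by auto
      ultimately show "i = j" using sp_inj by (meson inj_onD)
    qed
    show "b1 \<notin> (\<lambda>j. g (sp j)) ` {1..K}"
    proof
      assume "b1 \<in> (\<lambda>j. g (sp j)) ` {1..K}"
      then obtain x where x: "x \<in> {1..K}" "g (sp (K+1)) = g (sp x)" unfolding b1_def by auto
      have "K+1 = x" by (rule inj_onD[OF inj2 x(2)]) (use x in auto)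
      then show False using x by simp
    qed
    show "b2 \<notin> (\<lambda>j. g (sp j)) ` {1..K}"
    proof
      assume "b2 \<in> (\<lambda>j. g (sp j)) ` {1..K}"
      then obtain x where x: "x \<in> {1..K}" "g (sp (K+2)) = g (sp x)" unfolding b2_def by auto
      have "K+2 = x" by (rule inj_onD[OF inj2 x(2)]) (use x in auto)
      then show False using x by simp
    qed
    show "b1 \<noteq> b2"
    proof
      assume "b1 = b2"
      then have "g (sp (K+1)) = g (sp (K+2))" unfolding b1_def b2_def .
      then have "K+1 = K+2" by (rule inj_onD[OF inj2]) auto
      then show False by simp
    qed
  qed
  have a1: "\<alpha>1 b1 = Some (\<lambda>_. None)" "\<alpha>1 b2 = Some (\<lambda>_. None)"
  proof -
    have "b1 \<notin> (\<lambda>(j,u). the (\<sigma> (sp j))) ` set xs" "b2 \<notin> (\<lambda>(j,u). the (\<sigma> (sp j))) ` set xs"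
      unfolding img using b_not by auto
    then have "\<alpha>1 b1 = \<alpha>c b1" "\<alpha>1 b2 = \<alpha>c b2" using R(3) by auto
    moreover have "sp (K+1) \<in> set Lc" "sp (K+2) \<in> set Lc" using spL by auto
    ultimately show "\<alpha>1 b1 = Some (\<lambda>_. None)" "\<alpha>1 b2 = Some (\<lambda>_. None)"
      using C(3) unfolding b1_def b2_def by auto
  qed
  have s1: "\<sigma> (sp (K+1)) = Some b1" "\<sigma> (sp (K+2)) = Some b2" using \<sigma>sp unfolding b1_def b2_def by auto
  define \<alpha>2 where "\<alpha>2 = \<alpha>1(b1 := Some ((\<lambda>_. None)(fld FStop := Some None)), b2 := Some ((\<lambda>_. None)(fld FStop := Some None)))"
  have pg: "pgldmd fld sp s fs ms P = map (\<lambda>m. Basic (MD m)) (map Create Lc)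
     @ map (\<lambda>m. Basic (MD m)) (concat (map (\<lambda>(j,u). rho fld sp K j u) xs))
     @ [Basic (MD (Addfield (sp (K + 1)) (fld FStop))),
        Basic (MD (Addfield (sp (K + 2)) (fld FStop))),
        Basic (MD (Setspot s (sp 1))), Halt]"
    unfolding pgldmd_def Lc_def xs_def Let_def by (simp del: upt_Suc add: o_def)
  have run: "run_md Fo Me (pgldmd fld sp s fs ms P) t_init = St (\<sigma>(s := \<sigma> (sp 1))) \<alpha>2"
  proof -
    have "run_md Fo Me (pgldmd fld sp s fs ms P) t_init = run_md Fo Me [Basic (MD (Addfield (sp (K + 1)) (fld FStop))),
        Basic (MD (Addfield (sp (K + 2)) (fld FStop))),
        Basic (MD (Setspot s (sp 1))), Halt] (St \<sigma> \<alpha>1)"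
      unfolding pg run_md_map t_init_def C(1) \<sigma>_def[symmetric] R(1) by (rule refl)
    also have "\<dots> = St (\<sigma>(s := \<sigma> (sp 1))) \<alpha>2"
      using s1 a1 b_not(3) by (simp add: run_md_def is_field_def fields_of_def \<alpha>2_def)
    finally show ?thesis .
  qed
  have "good \<sigma> \<alpha>2"
    unfolding good_def
  proof (intro conjI)
    show "\<forall>j\<in>{1..K+2}. \<sigma> (sp j) \<noteq> None" using \<sigma>sp by auto
    show "\<forall>f\<in>set fs. \<sigma> f \<noteq> None \<and> (\<forall>f'\<in>Fo. \<sigma> f' = \<sigma> f \<longrightarrow> f' = f)"
      using C(2) unfolding \<sigma>_def Lc_def by (auto simp: inj_on_def split: if_splits)
    show "\<forall>m\<in>set ms. \<sigma> m \<noteq> None \<and> (\<forall>m'\<in>Me. \<sigma> m' = \<sigma> m \<longrightarrow> m' = m)"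
      using C(2) unfolding \<sigma>_def Lc_def by (auto simp: inj_on_def split: if_splits)
    show "\<forall>j\<in>{1..K}. fields_of \<sigma> \<alpha>2 (sp j) = specf \<sigma> fld sp K j (P ! (j - 1))"
    proof
      fix j assume j: "j \<in> {1..K}"
      have "g (sp j) \<noteq> b1" "g (sp j) \<noteq> b2" using b_not j by auto
      moreover have "\<alpha>1 (g (sp j)) = Some (specf \<sigma> fld sp K j (P ! (j - 1)))"
        using R(2) xs_in2[OF j] \<sigma>sp[of j] j by auto
      ultimately show "fields_of \<sigma> \<alpha>2 (sp j) = specf \<sigma> fld sp K j (P ! (j - 1))"
        using \<sigma>sp[of j] j by (simp add: fields_of_def \<alpha>2_def)
    qed
    show "fields_of \<sigma> \<alpha>2 (sp (K+1)) = (\<lambda>_. None)(fld FStop := Some None)"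
      using s1 b_not(3) by (simp add: fields_of_def \<alpha>2_def)
    show "fields_of \<sigma> \<alpha>2 (sp (K+2)) = (\<lambda>_. None)(fld FStop := Some None)"
      using s1 b_not(3) by (simp add: fields_of_def \<alpha>2_def)
  qed
  then show ?thesis using run by blast
qed

end



declare approx.simps(2)[simp del]

locale mainl = pre Fo Me fld s u v sp P fs ms
  for Fo Me :: "'s::{finite,linorder} set"
    and fld :: "fname \<Rightarrow> 'fld::finite"
    and s u v :: 's
    and sp :: "nat \<Rightarrow> 's"
    and P :: "('s, 'fld) act pgld_instr list"
    and fs ms :: "'s list" +
  fixes \<sigma> :: "'s \<Rightarrow> nat option" and \<alpha> :: "nat \<Rightarrow> ('fld \<Rightarrow> nat option option) option"
  assumes G: "good \<sigma> \<alpha>"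
begin

lemma fld_eq[simp]: "fld a = fld b \<longleftrightarrow> a = b"
  using A2 by (simp add: inj_eq)

lemma G1: "j \<in> {1..K+2} \<Longrightarrow> \<sigma> (sp j) \<noteq> None" using G unfolding good_def by blast
lemma G2: "f \<in> set fs \<Longrightarrow> \<sigma> f \<noteq> None" "f \<in> set fs \<Longrightarrow> f' \<in> Fo \<Longrightarrow> \<sigma> f' = \<sigma> f \<Longrightarrow> f' = f"
  using G unfolding good_def by blast+
lemma G3: "m \<in> set ms \<Longrightarrow> \<sigma> m \<noteq> None" "m \<in> set ms \<Longrightarrow> m' \<in> Me \<Longrightarrow> \<sigma> m' = \<sigma> m \<Longrightarrow> m' = m"
  using G unfolding good_def by blast+
lemma G4: "j \<in> {1..K} \<Longrightarrow> fields_of \<sigma> \<alpha> (sp j) = specf \<sigma> fld sp K j (P ! (j - 1))"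
  using G unfolding good_def by blast
lemma G5: "fields_of \<sigma> \<alpha> (sp (K+1)) = (\<lambda>_. None)(fld FStop := Some None)"
   "fields_of \<sigma> \<alpha> (sp (K+2)) = (\<lambda>_. None)(fld FStop := Some None)"
  using G unfolding good_def by blast+

definition Xp :: "('s, 'fld) act pga" where
  "Xp = ([], map (\<lambda>(j, w). psi K j w) (zip [1..<K + 1] P) @ [Halt, Halt])"

definition Ip :: "('s, 'fld) act pga" where "Ip = interp fld s u v"

definition R :: "nat \<Rightarrow> ('s, 'fld) mdstate \<Rightarrow> ('s, 'fld) act thread" where
  "R i t = (\<lambda>m. proj m (use_fin Fo Me (approx Ip m i) t))"

definition st :: "nat \<Rightarrow> nat option \<Rightarrow> nat option \<Rightarrow> ('s, 'fld) mdstate" where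
  "st j x y = St (\<sigma>(s := \<sigma> (sp j), u := x, v := y)) \<alpha>"

lemma I_instr:
  "instr_at Ip 1 = Some (Pos (MD (Hasfield s (fld FStop))))"
  "instr_at Ip (Suc 0) = Some (Pos (MD (Hasfield s (fld FStop))))"
  "instr_at Ip 2 = Some Halt"
  "instr_at Ip 3 = Some (Pos (MD (Hasfield s (fld FAjmp))))"
  "instr_at Ip 4 = Some (Jmp 9)"
  "instr_at Ip 5 = Some (Basic (MD (Getfield u s (fld FFocus))))"
  "instr_at Ip 6 = Some (Basic (MD (Getfield v s (fld FMethod))))"
  "instr_at Ip 7 = Some (Pos (MD (Genact u v)))"
  "instr_at Ip 8 = Some (Jmp 3)"
  "instr_at Ip 9 = Some (Basic (MD (Getfield s s (fld FNeg))))"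
  "instr_at Ip 10 = Some (Jmp 4)"
  "instr_at Ip 11 = Some (Basic (MD (Getfield s s (fld FPos))))"
  "instr_at Ip 12 = Some (Jmp 2)"
  "instr_at Ip 13 = Some (Basic (MD (Getfield s s (fld FAjmp))))"
  by (simp_all add: Ip_def interp_def instr_at_def)

lemma R_nonjump:
  assumes "\<not> fwd_jump Ip i"
  shows "R i t (Suc m) = proj (Suc m) (use_fin Fo Me (case instr_at Ip i of
          None \<Rightarrow> D
        | Some Halt \<Rightarrow> S
        | Some (Jmp l) \<Rightarrow> D
        | Some (Basic a) \<Rightarrow> Post (approx Ip m (Suc i)) a (approx Ip m (Suc i))
        | Some (Pos a) \<Rightarrow> Post (approx Ip m (Suc i)) a (approx Ip m (Suc (Suc i)))
        | Some (Neg a) \<Rightarrow> Post (approx Ip m (Suc (Suc i))) a (approx Ip m (Suc i))) t)"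
  unfolding R_def approx_nonjump[OF assms] by simp

lemma R_jump:
  assumes "fwd_jump Ip i"
  shows "R i t = R (jnext Ip i) t"
proof
  fix m show "R i t m = R (jnext Ip i) t m"
    unfolding R_def by (cases m) (simp_all del: approx.simps(2) add: approx_jump[OF assms])
qed

lemma R14: "R 14 t = R 1 t"
proof -
  have "approx Ip m (1 + length (snd Ip)) = approx Ip m 1" for m
    using approx_period[of "snd Ip" 1 m] by (simp add: Ip_def interp_def)
  moreover have "length (snd Ip) = 13" by (simp add: Ip_def interp_def)
  ultimately show ?thesis unfolding R_def by simp
qed


lemma R4: "R 4 t = R 13 t" by (subst R_jump) (simp_all add: fwd_jump_def jnext_def I_instr)
lemma R8: "R 8 t = R 11 t" by (subst R_jump) (simp_all add: fwd_jump_def jnext_def I_instr)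
lemma R10: "R 10 t = R 1 t" by (subst R_jump) (simp_all add: fwd_jump_def jnext_def I_instr R14)
lemma R12: "R 12 t = R 1 t" by (subst R_jump) (simp_all add: fwd_jump_def jnext_def I_instr R14)

lemma nfj: "instr_at Ip i = Some (Basic a) \<or> instr_at Ip i = Some (Pos a) \<or> instr_at Ip i = Some Halt \<Longrightarrow> \<not> fwd_jump Ip i"
  by (auto simp: fwd_jump_def)

lemma I_nfj: "\<not> fwd_jump Ip 1" "\<not> fwd_jump Ip 2" "\<not> fwd_jump Ip 3" "\<not> fwd_jump Ip 5" "\<not> fwd_jump Ip 6"
  "\<not> fwd_jump Ip 7" "\<not> fwd_jump Ip 9" "\<not> fwd_jump Ip 11" "\<not> fwd_jump Ip 13" "\<not> fwd_jump Ip (Suc 0)"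
  by (simp_all add: fwd_jump_def I_instr)

lemma fields_st: "fields_of (\<sigma>(s := \<sigma> (sp j), u := x, v := y)) \<alpha> s = fields_of \<sigma> \<alpha> (sp j)"
  using suv by (simp add: fields_of_def)

lemma upd_u: "(\<sigma>(s := a, u := x, v := y))(u := w) = \<sigma>(s := a, u := w, v := y)"
  using suv by (auto simp: fun_eq_iff)
lemma upd_v: "(\<sigma>(s := a, u := x, v := y))(v := w) = \<sigma>(s := a, u := x, v := w)"
  using suv by (auto simp: fun_eq_iff)
lemma upd_s: "(\<sigma>(s := a, u := x, v := y))(s := w) = \<sigma>(s := w, u := x, v := y)"
  using suv by (auto simp: fun_eq_iff)

lemma pos1: "j \<in> {1..K+2} \<Longrightarrow> R 1 (st j x y) (Suc m) =
   TauP (if fields_of \<sigma> \<alpha> (sp j) (fld FStop) \<noteq> None then R 2 (st j x y) m else R 3 (st j x y) m)"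
  using G1[of j] suv
  by (simp add: R_nonjump I_nfj I_instr st_def is_field_def fields_st) (simp add: R_def eval_nat_numeral)


lemma pos2: "R 2 t (Suc m) = S"
  by (simp add: R_nonjump I_nfj I_instr)

lemma pos3: "j \<in> {1..K+2} \<Longrightarrow> R 3 (st j x y) (Suc m) =
   TauP (if fields_of \<sigma> \<alpha> (sp j) (fld FAjmp) \<noteq> None then R 4 (st j x y) m else R 5 (st j x y) m)"
  using G1[of j] suv
  by (simp add: R_nonjump I_nfj I_instr st_def is_field_def fields_st) (simp add: R_def eval_nat_numeral)

lemma pos5: "j \<in> {1..K+2} \<Longrightarrow> fields_of \<sigma> \<alpha> (sp j) (fld FFocus) = Some w \<Longrightarrow>
   R 5 (st j x y) (Suc m) = TauP (R 6 (st j w y) m)"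
  using G1[of j] suv
  by (simp add: R_nonjump I_nfj I_instr st_def is_field_def fields_st upd_u) (simp add: R_def eval_nat_numeral)

lemma pos6: "j \<in> {1..K+2} \<Longrightarrow> fields_of \<sigma> \<alpha> (sp j) (fld FMethod) = Some w \<Longrightarrow>
   R 6 (st j x y) (Suc m) = TauP (R 7 (st j x w) m)"
  using G1[of j] suv
  by (simp add: R_nonjump I_nfj I_instr st_def is_field_def fields_st upd_v) (simp add: R_def eval_nat_numeral)

lemma getfield_s:
  assumes "j \<in> {1..K+2}" "fields_of \<sigma> \<alpha> (sp j) fl = Some (\<sigma> (sp q))"
    and "instr_at Ip i = Some (Basic (MD (Getfield s s fl)))"
  shows "R i (st j x y) (Suc m) = TauP (R (Suc i) (st q x y) m)"
  using G1[of j] suv assms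
  by (simp add: R_nonjump nfj st_def is_field_def fields_st upd_s) (simp add: R_def eval_nat_numeral)

lemma pos9: "j \<in> {1..K+2} \<Longrightarrow> fields_of \<sigma> \<alpha> (sp j) (fld FNeg) = Some (\<sigma> (sp q)) \<Longrightarrow>
   R 9 (st j x y) (Suc m) = TauP (R 1 (st q x y) m)"
  using getfield_s[of j "fld FNeg" q 9 x y m] by (simp add: I_instr R10)
lemma pos11: "j \<in> {1..K+2} \<Longrightarrow> fields_of \<sigma> \<alpha> (sp j) (fld FPos) = Some (\<sigma> (sp q)) \<Longrightarrow>
   R 11 (st j x y) (Suc m) = TauP (R 1 (st q x y) m)"
  using getfield_s[of j "fld FPos" q 11 x y m] by (simp add: I_instr R12)
lemma pos13: "j \<in> {1..K+2} \<Longrightarrow> fields_of \<sigma> \<alpha> (sp j) (fld FAjmp) = Some (\<sigma> (sp q)) \<Longrightarrow>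
   R 13 (st j x y) (Suc m) = TauP (R 1 (st q x y) m)"
  using getfield_s[of j "fld FAjmp" q 13 x y m] by (simp add: I_instr R14)

lemma Fo_set: "f \<in> set fs \<Longrightarrow> {f' \<in> Fo. (\<sigma>(s := a, u := \<sigma> f, v := y)) f' = (\<sigma>(s := a, u := \<sigma> f, v := y)) u} = {f}"
  using G2[of f] fs_Fo suv by auto
lemma Me_set: "m \<in> set ms \<Longrightarrow> {m' \<in> Me. (\<sigma>(s := a, u := x, v := \<sigma> m)) m' = (\<sigma>(s := a, u := x, v := \<sigma> m)) v} = {m}"
  using G3[of m] ms_Me suv by auto

lemma pos7: "f \<in> set fs \<Longrightarrow> mm \<in> set ms \<Longrightarrow>
   R 7 (st j (\<sigma> f) (\<sigma> mm)) (Suc m) = Post (R 8 (st j (\<sigma> f) (\<sigma> mm)) m) (FM f mm) (R 9 (st j (\<sigma> f) (\<sigma> mm)) m)"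
proof -
  assume f: "f \<in> set fs" and mm: "mm \<in> set ms"
  have fF: "f \<in> Fo" "mm \<in> Me" using f mm fs_Fo ms_Me by auto
  have ex: "\<exists>f'\<in>Fo. (\<sigma>(s := \<sigma> (sp j), u := \<sigma> f, v := \<sigma> mm)) f' = \<sigma> f"
    using fF suv by (intro bexI[of _ f]) auto
  have ex2: "\<exists>m'\<in>Me. (\<sigma>(s := \<sigma> (sp j), u := \<sigma> f, v := \<sigma> mm)) m' = \<sigma> mm"
    using fF suv by (intro bexI[of _ mm]) auto
  show ?thesis
    using G2(1)[OF f] G3(1)[OF mm] suv ex ex2 Fo_set[OF f, of "\<sigma> (sp j)" "\<sigma> mm"] Me_set[OF mm, of "\<sigma> (sp j)" "\<sigma> f"]
    by (simp add: R_nonjump I_nfj I_instr st_def) (simp add: R_def eval_nat_numeral)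
qed


subsection \<open>The PGLD side\<close>

lemma Xp_snd: "Xp = ([], snd Xp)" "length (snd Xp) = K + 2" "snd Xp \<noteq> []"
  using A3 by (simp_all add: Xp_def)

lemma X_at: "1 \<le> i \<Longrightarrow> instr_at Xp i = Some (snd Xp ! ((i - 1) mod (K + 2)))"
  using A3 by (simp add: Xp_def instr_at_def)

lemma X_instr: "j \<in> {1..K} \<Longrightarrow> instr_at Xp j = Some (psi K j (P ! (j - 1)))"
proof -
  assume j: "j \<in> {1..K}"
  then have jl: "j - 1 < K" "(j - 1) mod (K + 2) = j - 1" by auto
  have "snd Xp ! (j - 1) = psi K j (P ! (j - 1))"
    unfolding Xp_def using jl j A3 by (simp add: nth_append del: upt_Suc)
  then show ?thesis using X_at[of j] j jl by simp
qed

lemma X_halt: "instr_at Xp (K+1) = Some Halt" "instr_at Xp (K+2) = Some Halt"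
proof -
  have "(K + 1 - 1) mod (K + 2) = K" "(K + 2 - 1) mod (K + 2) = K + 1" by auto
  then show "instr_at Xp (K+1) = Some Halt" "instr_at Xp (K+2) = Some Halt"
    using X_at[of "K+1"] X_at[of "K+2"] A3 by (simp_all add: Xp_def nth_append del: upt_Suc)
qed

lemma X_period: "1 \<le> j \<Longrightarrow> instr_at Xp (q * (K + 2) + j) = instr_at Xp j"
proof -
  assume j: "1 \<le> j"
  have "(q * (K + 2) + j - 1) = (j - 1) + q * (K + 2)" using j by simp
  moreover have "(j - 1 + q * (K + 2)) mod (K + 2) = (j - 1) mod (K + 2)" by (rule mod_mult_self1)
  ultimately have "(q * (K + 2) + j - 1) mod (K + 2) = (j - 1) mod (K + 2)" by simp
  then show ?thesis using X_at[of j] X_at[of "q * (K + 2) + j"] j by simp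
qed

lemma approxX_period: "1 \<le> j \<Longrightarrow> approx Xp n (j + (K + 2)) = approx Xp n j"
  using approx_period[OF Xp_snd(3), of j n] Xp_snd by metis

definition jt :: "nat \<Rightarrow> nat option" where
  "jt j = (if 1 \<le> j \<and> j \<le> K then (case P ! (j - 1) of LAJmp l \<Rightarrow> if 1 \<le> l \<and> l \<le> K then Some l else None
                 | _ \<Rightarrow> None) else None)"

inductive trm :: "nat \<Rightarrow> bool" where
  trm_stop: "jt j = None \<Longrightarrow> trm j"
| trm_jmp: "jt j = Some l \<Longrightarrow> l \<noteq> j \<Longrightarrow> trm l \<Longrightarrow> trm j"

lemma jt_Some: "jt j = Some l \<Longrightarrow> j \<in> {1..K} \<and> P ! (j - 1) = LAJmp l \<and> l \<in> {1..K}"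
  by (auto simp: jt_def split: if_splits pgld_instr.splits)

lemma not_trm: "\<not> trm j \<Longrightarrow> \<exists>l. jt j = Some l \<and> (l = j \<or> \<not> trm l)"
  by (metis not_Some_eq trm.intros)

lemma X_halt_case: "instr_at Xp j = Some Halt \<Longrightarrow> approx Xp (Suc n) j = S"
  by (simp add: approx_nonjump fwd_jump_def)

lemma X_jump: assumes "jt j = Some l" "l \<noteq> j" shows "approx Xp (Suc n) j = approx Xp (Suc n) l"
proof -
  have J: "j \<in> {1..K}" "P ! (j - 1) = LAJmp l" "l \<in> {1..K}" using jt_Some[OF assms(1)] by auto
  have I: "instr_at Xp j = Some (psi K j (LAJmp l))" using X_instr[OF J(1)] J(2) by simp
  show ?thesis
  proof (cases "j < l")
    case True
    then have "instr_at Xp j = Some (Jmp (l - j))" using I J by (simp add: psi_def)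
    then have "fwd_jump Xp j" "jnext Xp j = l" using True by (auto simp: fwd_jump_def jnext_def)
    then show ?thesis using approx_jump by metis
  next
    case False
    then have lj: "l < j" using assms(2) by simp
    then have "instr_at Xp j = Some (Jmp (K + 2 - (j - l)))" using I J by (simp add: psi_def)
    moreover have "K + 2 - (j - l) > 0" using J lj by auto
    ultimately have "fwd_jump Xp j" "jnext Xp j = l + (K + 2)" using lj J by (auto simp: fwd_jump_def jnext_def)
    then show ?thesis using approx_jump approxX_period[of l] J by (metis atLeastAtMost_iff)
  qed
qed

lemma X_nonterm:
  assumes "\<not> trm j" "j \<in> {1..K+2}"
  shows "approx Xp (Suc n) j = D"
proof -
  define M where "M = {p. \<exists>q j0. p = q * (K + 2) + j0 \<and> j0 \<in> {1..K+2} \<and> \<not> trm j0}"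
  have cl: "\<forall>p\<in>M. instr_at Xp p = Some (Jmp 0) \<or> (fwd_jump Xp p \<and> jnext Xp p \<in> M)"
  proof
    fix p assume "p \<in> M"
    then obtain q j0 where p: "p = q * (K + 2) + j0" "j0 \<in> {1..K+2}" "\<not> trm j0" unfolding M_def by blast
    obtain l where l: "jt j0 = Some l" "l = j0 \<or> \<not> trm l" using not_trm[OF p(3)] by blast
    have J: "j0 \<in> {1..K}" "P ! (j0 - 1) = LAJmp l" "l \<in> {1..K}" using jt_Some[OF l(1)] by auto
    have I: "instr_at Xp p = Some (psi K j0 (LAJmp l))"
      using X_instr[OF J(1)] J(2) X_period[of j0 q] p J by simp
    show "instr_at Xp p = Some (Jmp 0) \<or> (fwd_jump Xp p \<and> jnext Xp p \<in> M)"
    proof (cases "l = j0")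
      case True then show ?thesis using I J by (simp add: psi_def)
    next
      case False
      then have nt: "\<not> trm l" using l by simp
      show ?thesis
      proof (cases "j0 < l")
        case True
        then have "instr_at Xp p = Some (Jmp (l - j0))" using I J by (simp add: psi_def)
        then have "fwd_jump Xp p" "jnext Xp p = q * (K + 2) + l" using True p by (auto simp: fwd_jump_def jnext_def)
        moreover have "l \<in> {1..K+2}" using J by auto
        ultimately show ?thesis using nt unfolding M_def by blast
      next
        case False
        then have lj: "l < j0" using \<open>l \<noteq> j0\<close> by simp
        then have "instr_at Xp p = Some (Jmp (K + 2 - (j0 - l)))" using I J by (simp add: psi_def)
        moreover have "K + 2 - (j0 - l) > 0" using J lj by auto
        ultimately have "fwd_jump Xp p" "jnext Xp p = Suc q * (K + 2) + l" using lj J p by (auto simp: fwd_jump_def jnext_def)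
        moreover have "l \<in> {1..K+2}" using J by auto
        ultimately show ?thesis using nt unfolding M_def by blast
      qed
    qed
  qed
  have "j \<in> M" unfolding M_def using assms by (intro CollectI exI[of _ 0] exI[of _ j]) simp
  then show ?thesis by (rule approx_D_closed[OF cl])
qed


subsection \<open>The interpreter side\<close>

lemma F_jump: "jt j = Some l \<Longrightarrow> fields_of \<sigma> \<alpha> (sp j) = (\<lambda>_. None)(fld FAjmp := Some (\<sigma> (sp l)))"
  using jt_Some[of j l] G4[of j] by (auto simp: specf_def)

lemma I_jump_steps:
  assumes "jt j = Some l"
  shows "\<forall>m. R 1 (st j x y) (Suc m) = TauP (R 3 (st j x y) m)"
    "\<forall>m. R 3 (st j x y) (Suc m) = TauP (R 13 (st j x y) m)"
    "\<forall>m. R 13 (st j x y) (Suc m) = TauP (R 1 (st l x y) m)"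
proof -
  have F: "fields_of \<sigma> \<alpha> (sp j) = (\<lambda>_. None)(fld FAjmp := Some (\<sigma> (sp l)))" using F_jump[OF assms] .
  have j: "j \<in> {1..K+2}" using jt_Some[OF assms] by auto
  show "\<forall>m. R 1 (st j x y) (Suc m) = TauP (R 3 (st j x y) m)" using pos1[OF j] F by simp
  show "\<forall>m. R 3 (st j x y) (Suc m) = TauP (R 13 (st j x y) m)" using pos3[OF j] F R4 by simp
  show "\<forall>m. R 13 (st j x y) (Suc m) = TauP (R 1 (st l x y) m)" using pos13[OF j] F by simp
qed

lemma I_jump: "jt j = Some l \<Longrightarrow> tt n (R 1 (st j x y)) = tt n (R 1 (st l x y))"
  using I_jump_steps[of j l x y] tt_tau by metis

lemma I_halt:
  assumes "j \<in> {1..K+2}" "fields_of \<sigma> \<alpha> (sp j) (fld FStop) \<noteq> None"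
  shows "tt (Suc n) (R 1 (st j x y)) = S"
proof -
  have "\<forall>m. R 1 (st j x y) (Suc m) = TauP (R 2 (st j x y) m)" using pos1[OF assms(1)] assms(2) by simp
  then have "tt (Suc n) (R 1 (st j x y)) = tt (Suc n) (R 2 (st j x y))" by (rule tt_tau)
  also have "\<dots> = S" by (rule tt_S) (simp add: pos2)
  finally show ?thesis .
qed

lemma I_act:
  assumes j: "j \<in> {1..K}" and F: "fields_of \<sigma> \<alpha> (sp j) = fa \<sigma> fld sp f mm p q"
    and f: "f \<in> set fs" and mm: "mm \<in> set ms"
  shows "tt (Suc n) (R 1 (st j x y)) =
     Post (tt n (R 1 (st p (\<sigma> f) (\<sigma> mm)))) (FM f mm) (tt n (R 1 (st q (\<sigma> f) (\<sigma> mm))))"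
proof -
  have j2: "j \<in> {1..K+2}" using j by auto
  have "\<forall>m. R 1 (st j x y) (Suc m) = TauP (R 3 (st j x y) m)" using pos1[OF j2] F by (simp add: fa_def)
  then have e1: "tt (Suc n) (R 1 (st j x y)) = tt (Suc n) (R 3 (st j x y))" by (rule tt_tau)
  have "\<forall>m. R 3 (st j x y) (Suc m) = TauP (R 5 (st j x y) m)" using pos3[OF j2] F by (simp add: fa_def)
  then have e2: "tt (Suc n) (R 3 (st j x y)) = tt (Suc n) (R 5 (st j x y))" by (rule tt_tau)
  have "\<forall>m. R 5 (st j x y) (Suc m) = TauP (R 6 (st j (\<sigma> f) y) m)" using pos5[OF j2] F by (simp add: fa_def)
  then have e3: "tt (Suc n) (R 5 (st j x y)) = tt (Suc n) (R 6 (st j (\<sigma> f) y))" by (rule tt_tau)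
  have "\<forall>m. R 6 (st j (\<sigma> f) y) (Suc m) = TauP (R 7 (st j (\<sigma> f) (\<sigma> mm)) m)" using pos6[OF j2] F by (simp add: fa_def)
  then have e4: "tt (Suc n) (R 6 (st j (\<sigma> f) y)) = tt (Suc n) (R 7 (st j (\<sigma> f) (\<sigma> mm)))" by (rule tt_tau)
  have "\<forall>m. R 7 (st j (\<sigma> f) (\<sigma> mm)) (Suc m) = Post (R 8 (st j (\<sigma> f) (\<sigma> mm)) m) (FM f mm) (R 9 (st j (\<sigma> f) (\<sigma> mm)) m)"
    using pos7[OF f mm] by simp
  then have e5: "tt (Suc n) (R 7 (st j (\<sigma> f) (\<sigma> mm))) =
      Post (tt n (R 8 (st j (\<sigma> f) (\<sigma> mm)))) (FM f mm) (tt n (R 9 (st j (\<sigma> f) (\<sigma> mm))))" by (rule tt_post)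
  have "\<forall>m. R 11 (st j (\<sigma> f) (\<sigma> mm)) (Suc m) = TauP (R 1 (st p (\<sigma> f) (\<sigma> mm)) m)"
    using pos11[OF j2] F by (simp add: fa_def)
  then have e6: "tt n (R 8 (st j (\<sigma> f) (\<sigma> mm))) = tt n (R 1 (st p (\<sigma> f) (\<sigma> mm)))" unfolding R8 by (rule tt_tau)
  have "\<forall>m. R 9 (st j (\<sigma> f) (\<sigma> mm)) (Suc m) = TauP (R 1 (st q (\<sigma> f) (\<sigma> mm)) m)"
    using pos9[OF j2] F by (simp add: fa_def)
  then have e7: "tt n (R 9 (st j (\<sigma> f) (\<sigma> mm))) = tt n (R 1 (st q (\<sigma> f) (\<sigma> mm)))" by (rule tt_tau)
  show ?thesis using e1 e2 e3 e4 e5 e6 e7 by simp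
qed

lemma I_nonterm:
  assumes "\<not> trm j" "j \<in> {1..K+2}"
  shows "inf_tau (R 1 (st j x y))"
proof -
  define M where "M = {R i (st j x y) | i j x y. i \<in> {1, 3, 13} \<and> j \<in> {1..K+2} \<and> \<not> trm j}"
  have cl: "\<forall>p\<in>M. head_tau p \<and> ttail p \<in> M"
  proof
    fix p assume "p \<in> M"
    then obtain i j x y where p: "p = R i (st j x y)" "i \<in> {1, 3, 13}" "j \<in> {1..K+2}" "\<not> trm j"
      unfolding M_def by blast
    obtain l where l: "jt j = Some l" "l = j \<or> \<not> trm l" using not_trm[OF p(4)] by blast
    have nl: "\<not> trm l" "l \<in> {1..K+2}" using l p(4) jt_Some[OF l(1)] by auto
    note S = I_jump_steps[OF l(1), of x y]
    show "head_tau p \<and> ttail p \<in> M"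
    proof -
      { assume "i = 1"
        then have ?thesis using p S(1) head_tau_tau[OF S(1)] ttail_tau[OF S(1)] unfolding M_def by blast }
      moreover
      { assume "i = 3"
        then have ?thesis using p S(2) head_tau_tau[OF S(2)] ttail_tau[OF S(2)] unfolding M_def by blast }
      moreover
      { assume "i = 13"
        then have ?thesis using p nl head_tau_tau[OF S(3)] ttail_tau[OF S(3)] unfolding M_def by blast }
      ultimately show ?thesis using p(2) by blast
    qed
  qed
  have "R 1 (st j x y) \<in> M" unfolding M_def using assms by blast
  then show ?thesis by (rule inf_tau_closed[OF cl])
qed


lemma act_info:
  assumes "j \<in> {1..K}" "instr_act (P ! (j - 1)) = Some a"
  shows "\<exists>f mm. a = FM f mm \<and> f \<in> set fs \<and> mm \<in> set ms"
proof -
  have w: "P ! (j - 1) \<in> set P" using assms(1) by (intro nth_mem) auto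
  then obtain f mm where a: "a = FM f mm" using A4 assms(2) by blast
  have "f \<in> foci_of P" "mm \<in> meths_of P" using w assms(2) a unfolding foci_of_def meths_of_def by blast+
  then show ?thesis using a A8 A10 by blast
qed

lemma main: "\<forall>j\<in>{1..K+2}. \<forall>x y. approx Xp n j = tt n (R 1 (st j x y))"
proof (induction n)
  case 0 show ?case by simp
next
  case (Suc n)
  have T: "trm j \<Longrightarrow> j \<in> {1..K+2} \<Longrightarrow> \<forall>x y. approx Xp (Suc n) j = tt (Suc n) (R 1 (st j x y))" for j
  proof (induction j rule: trm.induct)
    case (trm_stop j)
    show ?case
    proof (intro allI)
      fix x y
      consider "j = K+1" | "j = K+2" | "j \<in> {1..K}" using trm_stop.prems by force
      then show "approx Xp (Suc n) j = tt (Suc n) (R 1 (st j x y))"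
      proof cases
        case 1
        then show ?thesis using X_halt_case[OF X_halt(1)] I_halt[of j] G5 trm_stop.prems by simp
      next
        case 2
        then show ?thesis using X_halt_case[OF X_halt(2)] I_halt[of j] G5 trm_stop.prems by simp
      next
        case 3
        have IX: "instr_at Xp j = Some (psi K j (P ! (j - 1)))" using X_instr[OF 3] .
        have FJ: "fields_of \<sigma> \<alpha> (sp j) = specf \<sigma> fld sp K j (P ! (j - 1))" using G4[OF 3] .
        have j2: "j \<in> {1..K+2}" using 3 by auto
        have IH1: "\<forall>x y. approx Xp n (j + 1) = tt n (R 1 (st (j + 1) x y))"
          and IH2: "\<forall>x y. approx Xp n (j + 2) = tt n (R 1 (st (j + 2) x y))"
          using Suc.IH 3 by auto
        show ?thesis
        proof (cases "P ! (j - 1)")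
          case (LAJmp l)
          then have "\<not> (1 \<le> l \<and> l \<le> K)" using trm_stop.hyps 3 by (auto simp: jt_def split: if_splits)
          then have "instr_at Xp j = Some Halt" "fields_of \<sigma> \<alpha> (sp j) (fld FStop) \<noteq> None"
            using IX FJ LAJmp 3 by (auto simp: psi_def specf_def)
          then show ?thesis using X_halt_case I_halt[OF j2] by simp
        next
          case (LBasic a)
          then obtain f mm where a: "a = FM f mm" "f \<in> set fs" "mm \<in> set ms"
            using act_info[OF 3] by (auto simp: instr_act_def)
          have "approx Xp (Suc n) j = Post (approx Xp n (Suc j)) a (approx Xp n (Suc j))"
            using IX LBasic by (simp add: approx_nonjump fwd_jump_def psi_def)
          moreover have "tt (Suc n) (R 1 (st j x y)) = Post (tt n (R 1 (st (j+1) (\<sigma> f) (\<sigma> mm)))) (FM f mm) (tt n (R 1 (st (j+1) (\<sigma> f) (\<sigma> mm))))"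
            using I_act[OF 3 _ a(2,3)] FJ LBasic a by (simp add: specf_def)
          ultimately show ?thesis using IH1 a by simp
        next
          case (LPos a)
          then obtain f mm where a: "a = FM f mm" "f \<in> set fs" "mm \<in> set ms"
            using act_info[OF 3] by (auto simp: instr_act_def)
          have "approx Xp (Suc n) j = Post (approx Xp n (Suc j)) a (approx Xp n (Suc (Suc j)))"
            using IX LPos by (simp add: approx_nonjump fwd_jump_def psi_def)
          moreover have "tt (Suc n) (R 1 (st j x y)) = Post (tt n (R 1 (st (j+1) (\<sigma> f) (\<sigma> mm)))) (FM f mm) (tt n (R 1 (st (j+2) (\<sigma> f) (\<sigma> mm))))"
            using I_act[OF 3 _ a(2,3)] FJ LPos a by (simp add: specf_def)
          ultimately show ?thesis using IH1 IH2 a by simp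
        next
          case (LNeg a)
          then obtain f mm where a: "a = FM f mm" "f \<in> set fs" "mm \<in> set ms"
            using act_info[OF 3] by (auto simp: instr_act_def)
          have "approx Xp (Suc n) j = Post (approx Xp n (Suc (Suc j))) a (approx Xp n (Suc j))"
            using IX LNeg by (simp add: approx_nonjump fwd_jump_def psi_def)
          moreover have "tt (Suc n) (R 1 (st j x y)) = Post (tt n (R 1 (st (j+2) (\<sigma> f) (\<sigma> mm)))) (FM f mm) (tt n (R 1 (st (j+1) (\<sigma> f) (\<sigma> mm))))"
            using I_act[OF 3 _ a(2,3)] FJ LNeg a by (simp add: specf_def)
          ultimately show ?thesis using IH1 IH2 a by simp
        qed
      qed
    qed
  next
    case (trm_jmp j l)
    have l: "l \<in> {1..K+2}" using jt_Some[OF trm_jmp.hyps(1)] by auto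
    show ?case
    proof (intro allI)
      fix x y
      have "approx Xp (Suc n) j = approx Xp (Suc n) l" using X_jump[OF trm_jmp.hyps(1,2)] .
      also have "\<dots> = tt (Suc n) (R 1 (st l x y))" using trm_jmp.IH l by blast
      also have "\<dots> = tt (Suc n) (R 1 (st j x y))" using I_jump[OF trm_jmp.hyps(1)] by simp
      finally show "approx Xp (Suc n) j = tt (Suc n) (R 1 (st j x y))" .
    qed
  qed
  show ?case
  proof (intro ballI allI)
    fix j x y assume j: "j \<in> {1..K+2}"
    show "approx Xp (Suc n) j = tt (Suc n) (R 1 (st j x y))"
    proof (cases "trm j")
      case True then show ?thesis using T j by blast
    next
      case False
      then show ?thesis using X_nonterm[OF False j] tt_inf[OF I_nonterm[OF False j]] by simp
    qed
  qed
qed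

lemma final: "pgld_beh P = tau_abs (use_md Fo Me (pga_beh (interp fld s u v)) (St (\<sigma>(s := \<sigma> (sp 1))) \<alpha>))"
proof -
  have e1: "pgld_beh P = (\<lambda>n. approx Xp n 1)" unfolding pgld_beh_def pga_beh_def Xp_def by simp
  have e2: "St (\<sigma>(s := \<sigma> (sp 1))) \<alpha> = st 1 (\<sigma> u) (\<sigma> v)"
    unfolding st_def using suv by (auto simp: fun_eq_iff)
  have e3: "use_md Fo Me (pga_beh (interp fld s u v)) t = R 1 t" for t
    unfolding use_md_def pga_beh_def R_def Ip_def by simp
  have "approx Xp n 1 = tt n (R 1 (st 1 (\<sigma> u) (\<sigma> v)))" for n using main[of n] by simp
  then show ?thesis unfolding e1 e2 e3 tau_abs_def by simp
qed

end

theorem theorem1: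
  fixes Fo Me :: "'s::{finite,linorder} set"
    and fld :: "fname \<Rightarrow> 'fld::finite"
    and s u v :: 's
    and sp :: "nat \<Rightarrow> 's"
    and P :: "('s, 'fld) act pgld_instr list"
    and fs ms :: "'s list"
  assumes "Fo \<inter> Me = {}"
    and "inj fld"
    and "length P \<ge> 1"
    and "\<forall>w\<in>set P. \<forall>a. instr_act w = Some a \<longrightarrow> (\<exists>f m. a = FM f m \<and> f \<in> Fo \<and> m \<in> Me)"
    and "distinct (s # u # v # map sp [1..<length P + 3])"
    and "\<forall>x\<in>{s, u, v} \<union> sp ` {1..length P + 2}. x \<notin> Fo \<union> Me"
    and "distinct fs" and "set fs = foci_of P"
    and "distinct ms" and "set ms = meths_of P"
  shows "pgld_beh P =
    tau_abs (use_md Fo Me (pga_beh (interp fld s u v))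
                          (run_md Fo Me (pgldmd fld sp s fs ms P) t_init))"
proof -
  interpret pre Fo Me fld s u v sp P fs ms using assms by unfold_locales
  obtain \<sigma> \<alpha> where r: "run_md Fo Me (pgldmd fld sp s fs ms P) t_init = St (\<sigma>(s := \<sigma> (sp 1))) \<alpha>" "good \<sigma> \<alpha>"
    using run_good by blast
  interpret mainl Fo Me fld s u v sp P fs ms \<sigma> \<alpha> using r(2) by unfold_locales
  show ?thesis unfolding r(1) by (rule final)
qed


end
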